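(* Let $q=r^2$ where $r$ is an odd prime power, and let $q-1=e_1f_1=e_2f_2$ with positive integers $e_1,f_1,e_2,f_2$. Suppose there is an integer $l\geq 2$ with $e_1\equiv 2^l \pmod{2^{l+1}}$ and $2^l\mid e_2$. Suppose further that $2e_2\mid e_1(r-1)$ and $e_1\mid e_2(r+1)$. Let $D_1=\frac{e_1}{\gcd(e_1,e_2)}$, $D_2=\frac{e_2}{\gcd(e_1,e_2)}$, and let $s,t$ be integers with $1\leq s\leq D_1$, $1\leq t\leq D_2$ and $4\mid (s-1)(r+1)$. Put $n_1=sf_1+tf_2$. Then: (1) if $n_1$ is even, there exists a $q$-ary MDS self-dual code of length $n_1$; (2) if $n_1$ is odd, there exists a $q$-ary MDS self-dual code of length $n_1+1$; (3) if $n_1$ is even, there exists a $q$-ary MDS self-dual code of length $n_1+2$.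
   Context: $\mathbb{F}_q$ denotes the finite field with $q$ elements. A linear code of length $n$ over $\mathbb{F}_q$ is a subspace of $\mathbb{F}_q^n$; an $[n,k,d]$ code has dimension $k$ and minimum Hamming distance $d$, and it is MDS if $d=n-k+1$. The (Euclidean) dual of a code $C$ is $C^\perp=\{x\in\mathbb{F}_q^n : \sum_i x_ic_i=0 \text{ for all } c\in C\}$; $C$ is self-dual if $C=C^\perp$. A $q$-ary MDS self-dual code of length $n$ is a linear code over $\mathbb{F}_q$ of length $n$ that is both MDS and self-dual. *)

theory Defs
  imports Complex_Main "HOL-Library.Function_Algebras" "HOL-Library.Cardinality" "HOL-Computational_Algebra.Primes"
    "HOL-Number_Theory.Cong"
begin

text \<open>Vectors of length n over a field are modelled as functions nat => 'a that vanish
  outside {0..<n}; F_q^n is the set fvec n.\<close>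

definition fvec :: "nat \<Rightarrow> (nat \<Rightarrow> 'a::zero) set" where
  "fvec n = {v. \<forall>i\<ge>n. v i = 0}"

definition vscale :: "'a::field \<Rightarrow> (nat \<Rightarrow> 'a) \<Rightarrow> (nat \<Rightarrow> 'a)" where
  "vscale c v = (\<lambda>i. c * v i)"

definition linear_code :: "nat \<Rightarrow> (nat \<Rightarrow> 'a::field) set \<Rightarrow> bool" where
  "linear_code n C \<longleftrightarrow> C \<subseteq> fvec n \<and> module.subspace vscale C"

definition code_dim :: "(nat \<Rightarrow> 'a::field) set \<Rightarrow> nat" where
  "code_dim C = vector_space.dim vscale C"

definition hamming_dist :: "nat \<Rightarrow> (nat \<Rightarrow> 'a) \<Rightarrow> (nat \<Rightarrow> 'a) \<Rightarrow> nat" where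
  "hamming_dist n x y = card {i. i < n \<and> x i \<noteq> y i}"

definition min_dist :: "nat \<Rightarrow> (nat \<Rightarrow> 'a) set \<Rightarrow> nat" where
  "min_dist n C = Min {hamming_dist n x y | x y. x \<in> C \<and> y \<in> C \<and> x \<noteq> y}"

definition dual_code :: "nat \<Rightarrow> (nat \<Rightarrow> 'a::field) set \<Rightarrow> (nat \<Rightarrow> 'a) set" where
  "dual_code n C = {x \<in> fvec n. \<forall>c\<in>C. (\<Sum>i<n. x i * c i) = 0}"

definition is_MDS :: "nat \<Rightarrow> (nat \<Rightarrow> 'a::field) set \<Rightarrow> bool" where
  "is_MDS n C \<longleftrightarrow> linear_code n C \<and> min_dist n C = n - code_dim C + 1"

definition self_dual :: "nat \<Rightarrow> (nat \<Rightarrow> 'a::field) set \<Rightarrow> bool" where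
  "self_dual n C \<longleftrightarrow> linear_code n C \<and> C = dual_code n C"

definition MDS_self_dual :: "nat \<Rightarrow> (nat \<Rightarrow> 'a::field) set \<Rightarrow> bool" where
  "MDS_self_dual n C \<longleftrightarrow> is_MDS n C \<and> self_dual n C"

end

theory Submission
  imports Defs "HOL-Number_Theory.Residues" "HOL-Computational_Algebra.Polynomial" "HOL-Number_Theory.Cong"
begin

lemma vs_vscale: "vector_space (vscale :: 'a::field \<Rightarrow> (nat \<Rightarrow> 'a) \<Rightarrow> (nat \<Rightarrow> 'a))"
  by unfold_locales (auto simp: vscale_def fun_eq_iff algebra_simps)

interpretation V: vector_space "vscale :: 'a::field \<Rightarrow> (nat \<Rightarrow> 'a) \<Rightarrow> (nat \<Rightarrow> 'a)"
  by (rule vs_vscale)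

lemma sum_fun_apply: "(\<Sum>j\<in>A. f j) (i::'b) = (\<Sum>j\<in>A. f j i :: 'c::comm_monoid_add)"
  by (induct A rule: infinite_finite_induct) auto

definition Uf :: "(nat \<Rightarrow> 'a::field) \<Rightarrow> nat \<Rightarrow> nat \<Rightarrow> 'a" where
  "Uf a n i = (\<Prod>j\<in>{..<n}-{i}. a i - a j)"

definition Lp :: "(nat \<Rightarrow> 'a::field) \<Rightarrow> nat \<Rightarrow> nat \<Rightarrow> 'a poly" where
  "Lp a n i = (\<Prod>j\<in>{..<n}-{i}. [:- a j, 1:])"

lemma Uf_nz: "inj_on a {..<n} \<Longrightarrow> i < n \<Longrightarrow> Uf a n i \<noteq> 0"
  unfolding Uf_def by (auto simp: inj_on_def)

lemma Lp_eval: "i < n \<Longrightarrow> j < n \<Longrightarrow> poly (Lp a n i) (a j) = (if j = i then Uf a n i else 0)"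
  unfolding Lp_def Uf_def poly_prod
  by (auto intro!: prod.cong)

lemma Lp_degree: "i < n \<Longrightarrow> degree (Lp a n i) = n - 1"
  unfolding Lp_def by (subst degree_prod_eq_sum_degree) auto

lemma Lp_lead: "i < n \<Longrightarrow> Polynomial.coeff (Lp a n i) (n - 1) = 1"
  using lead_coeff_prod[of "\<lambda>j. [:- a j, 1:]" "{..<n}-{i}"] Lp_degree[of i n a]
  by (simp add: Lp_def)

lemma interp:
  fixes a y :: "nat \<Rightarrow> 'a::field"
  assumes "inj_on a {..<n}" "n \<ge> 1"
  shows "\<exists>F. degree F < n \<and> (\<forall>j<n. poly F (a j) = y j)"
proof -
  define F where "F = (\<Sum>i<n. Polynomial.smult (y i / Uf a n i) (Lp a n i))"
  have "degree F \<le> n - 1" unfolding F_def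
    by (rule degree_sum_le) (auto intro: order.trans[OF degree_smult_le] simp: Lp_degree)
  moreover have "poly F (a j) = y j" if "j < n" for j
  proof -
    have "poly F (a j) = (\<Sum>i<n. y i / Uf a n i * (if j = i then Uf a n i else 0))"
      unfolding F_def poly_sum poly_smult using that by (auto simp: Lp_eval intro!: sum.cong)
    also have "\<dots> = (\<Sum>i<n. if i = j then y j else 0)"
      by (rule sum.cong) (use Uf_nz[OF assms(1)] in auto)
    also have "\<dots> = y j" using that by simp
    finally show ?thesis .
  qed
  ultimately show ?thesis using assms by (intro exI[of _ F]) auto
qed

lemma lagrange:
  assumes inj: "inj_on a {..<n}" and dH: "degree H < n"
  shows "Polynomial.coeff H (n - 1) = (\<Sum>i<n. poly H (a i) / Uf a n i)"
proof -
  have n1: "n \<ge> 1" using dH by auto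
  define I where "I = (\<Sum>i<n. Polynomial.smult (poly H (a i) / Uf a n i) (Lp a n i))"
  have dI: "degree I \<le> n - 1" unfolding I_def
    by (rule degree_sum_le) (auto intro: order.trans[OF degree_smult_le] simp: Lp_degree)
  have ev: "poly I (a j) = poly H (a j)" if "j < n" for j
  proof -
    have "poly I (a j) = (\<Sum>i<n. poly H (a i) / Uf a n i * (if j = i then Uf a n i else 0))"
      unfolding I_def poly_sum poly_smult using that by (auto simp: Lp_eval intro!: sum.cong)
    also have "\<dots> = (\<Sum>i<n. if i = j then poly H (a j) else 0)"
      by (rule sum.cong) (use Uf_nz[OF inj] in auto)
    also have "\<dots> = poly H (a j)" using that by simp
    finally show ?thesis .
  qed
  have cardA: "card (a ` {..<n}) = n" using inj by (simp add: card_image)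
  have "I = H"
    by (rule poly_eqI_degree[of "a ` {..<n}"]) (use ev dI dH n1 cardA in auto)
  then have "Polynomial.coeff H (n-1) = Polynomial.coeff I (n-1)" by simp
  also have "\<dots> = (\<Sum>i<n. poly H (a i) / Uf a n i)"
    unfolding I_def coeff_sum coeff_smult by (intro sum.cong refl) (simp add: Lp_lead[simplified])
  finally show ?thesis .
qed

lemma poly_lt_sum: fixes f :: "'a::comm_ring_1 poly" assumes "degree f < k" shows "poly f x = (\<Sum>j<k. Polynomial.coeff f j * x ^ j)"
proof -
  have "poly f x = (\<Sum>i\<le>degree f. Polynomial.coeff f i * x ^ i)" by (rule poly_altdef)
  also have "\<dots> = (\<Sum>j<k. Polynomial.coeff f j * x ^ j)"
    by (rule sum.mono_neutral_left) (use assms in \<open>auto simp: coeff_eq_0\<close>)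
  finally show ?thesis .
qed

locale grs =
  fixes n k :: nat and a v :: "nat \<Rightarrow> 'a::field" and lam :: 'a
  assumes nk: "n = 2 * k" and k1: "1 \<le> k" and inj: "inj_on a {..<n}"
    and vnz: "\<And>i. i < n \<Longrightarrow> v i \<noteq> 0" and lamnz: "lam \<noteq> 0"
    and vU: "\<And>i. i < n \<Longrightarrow> v i ^ 2 * Uf a n i = lam"
begin

definition cw :: "'a poly \<Rightarrow> nat \<Rightarrow> 'a" where
  "cw f = (\<lambda>i. if i < n then v i * poly f (a i) else 0)"

definition CC :: "(nat \<Rightarrow> 'a) set" where
  "CC = cw ` {f. degree f < k}"

lemma cw_add: "cw (f + g) = cw f + cw g"
  by (auto simp: cw_def fun_eq_iff algebra_simps)

lemma cw_smult: "cw (Polynomial.smult c f) = vscale c (cw f)"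
  by (auto simp: cw_def fun_eq_iff vscale_def algebra_simps)

lemma cw_0: "cw 0 = 0"
  by (auto simp: cw_def fun_eq_iff)

lemma cw_eq_imp:
  assumes "degree f < n" "degree g < n" "cw f = cw g"
  shows "f = g"
proof -
  have "poly f (a j) = poly g (a j)" if "j < n" for j
    using fun_cong[OF assms(3), of j] that vnz[OF that] by (auto simp: cw_def)
  moreover have "card (a ` {..<n}) = n" using inj by (simp add: card_image)
  ultimately show ?thesis using assms(1,2) by (intro poly_eqI_degree[of "a ` {..<n}"]) auto
qed

lemma kn: "k < n" using nk k1 by simp

lemma CC_fvec: "CC \<subseteq> fvec n"
  by (auto simp: CC_def cw_def fvec_def)

lemma subspace_CC: "V.subspace CC"
  unfolding V.subspace_def
proof (intro conjI ballI allI)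
  show "0 \<in> CC" unfolding CC_def using cw_0 k1 by (intro image_eqI[of _ _ 0]) auto
next
  fix x y assume "x \<in> CC" "y \<in> CC"
  then obtain f g where "x = cw f" "y = cw g" "degree f < k" "degree g < k" by (auto simp: CC_def)
  then show "x + y \<in> CC" unfolding CC_def
    by (intro image_eqI[of _ _ "f + g"]) (auto simp: cw_add intro: le_less_trans[OF degree_add_le_max])
next
  fix c x assume "x \<in> CC"
  then obtain f where "x = cw f" "degree f < k" by (auto simp: CC_def)
  then show "vscale c x \<in> CC" unfolding CC_def
    by (intro image_eqI[of _ _ "Polynomial.smult c f"]) (auto simp: cw_smult intro: le_less_trans[OF degree_smult_le])
qed

lemma linear_CC: "linear_code n CC"
  using CC_fvec subspace_CC by (simp add: linear_code_def)

lemma ip_cw: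
  assumes "degree (f * g) < n"
  shows "(\<Sum>i<n. cw f i * cw g i) = lam * Polynomial.coeff (f * g) (n - 1)"
proof -
  have "(\<Sum>i<n. cw f i * cw g i) = (\<Sum>i<n. lam * (poly (f * g) (a i) / Uf a n i))"
  proof (rule sum.cong[OF refl])
    fix i assume "i \<in> {..<n}"
    then have i: "i < n" by simp
    have vv: "v i * v i = lam / Uf a n i" using vU[OF i] Uf_nz[OF inj i] by (simp add: field_simps power2_eq_square)
    have "cw f i * cw g i = (v i * v i) * poly (f * g) (a i)"
      using i by (simp add: cw_def algebra_simps)
    also have "\<dots> = lam * (poly (f * g) (a i) / Uf a n i)" by (simp add: vv)
    finally show "cw f i * cw g i = lam * (poly (f * g) (a i) / Uf a n i)" .
  qed
  also have "\<dots> = lam * (\<Sum>i<n. poly (f * g) (a i) / Uf a n i)"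
    by (rule sum_distrib_left[symmetric])
  also have "\<dots> = lam * Polynomial.coeff (f * g) (n - 1)"
    using lagrange[OF inj assms] by simp
  finally show ?thesis .
qed

lemma CC_sub_dual: "CC \<subseteq> dual_code n CC"
proof
  fix x assume x: "x \<in> CC"
  then obtain f where f: "x = cw f" "degree f < k" by (auto simp: CC_def)
  have "(\<Sum>i<n. x i * c i) = 0" if "c \<in> CC" for c
  proof -
    obtain g where g: "c = cw g" "degree g < k" using \<open>c \<in> CC\<close> by (auto simp: CC_def)
    have d: "degree (f * g) < n - 1"
      using degree_mult_le[of f g] f g nk by linarith
    show ?thesis using ip_cw[of f g] d f g by (simp add: coeff_eq_0)
  qed
  then show "x \<in> dual_code n CC" using x CC_fvec by (auto simp: dual_code_def)
qed

lemma dual_sub_CC: "dual_code n CC \<subseteq> CC"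
proof
  fix x assume x: "x \<in> dual_code n CC"
  then have xf: "x \<in> fvec n" and orth: "\<And>c. c \<in> CC \<Longrightarrow> (\<Sum>i<n. x i * c i) = 0"
    by (auto simp: dual_code_def)
  obtain F where F: "degree F < n" "\<And>j. j < n \<Longrightarrow> poly F (a j) = x j / v j"
    using interp[OF inj, of "\<lambda>j. x j / v j"] kn by auto
  have xcw: "x = cw F"
  proof
    fix i show "x i = cw F i"
      using xf F(2)[of i] vnz[of i] by (auto simp: cw_def fvec_def)
  qed
  have "degree F < k"
  proof (rule ccontr)
    assume "\<not> degree F < k"
    then have dk: "degree F \<ge> k" by simp
    define d where "d = degree F"
    define g :: "'a poly" where "g = Polynomial.monom 1 (n - 1 - d)"
    have dg: "degree g = n - 1 - d" by (simp add: g_def degree_monom_eq)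
    have "degree g < k" using dg dk nk d_def k1 by arith
    then have gC: "cw g \<in> CC" unfolding CC_def by auto
    have Fnz: "F \<noteq> 0" using dk k1 by auto
    have dFg: "degree (F * g) = n - 1"
      using F(1) dg Fnz by (simp add: degree_mult_eq g_def d_def)
    have "(\<Sum>i<n. cw F i * cw g i) = 0" using orth[OF gC] xcw by simp
    then have "lam * Polynomial.coeff (F * g) (n - 1) = 0" using ip_cw[of F g] dFg kn by simp
    moreover have "Polynomial.coeff (F * g) (n - 1) = lead_coeff F"
    proof -
      have "Polynomial.coeff (F * g) (n - 1) = Polynomial.coeff (Polynomial.monom 1 (n-1-d) * F) (n-1)" by (simp add: g_def mult.commute)
      also have "\<dots> = Polynomial.coeff F ((n-1) - (n-1-d))" by (simp add: coeff_monom_mult)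
      also have "(n-1) - (n-1-d) = d" using F(1) d_def by arith
      finally show ?thesis by (simp add: d_def)
    qed
    ultimately show False using lamnz Fnz by simp
  qed
  then show "x \<in> CC" unfolding CC_def using xcw by auto
qed

lemma cw_sum: "cw (\<Sum>j\<in>A. f j) = (\<Sum>j\<in>A. cw (f j))"
  by (induct A rule: infinite_finite_induct) (auto simp: cw_0 cw_add)

definition bb :: "nat \<Rightarrow> nat \<Rightarrow> 'a" where "bb j = cw (Polynomial.monom 1 j)"

lemma bb_inj: "inj_on bb {..<k}"
proof
  fix i j assume ij: "i \<in> {..<k}" "j \<in> {..<k}" "bb i = bb j"
  then have "Polynomial.monom (1::'a) i = Polynomial.monom 1 j"
    using kn by (intro cw_eq_imp) (auto simp: bb_def degree_monom_eq)
  then have "Polynomial.coeff (Polynomial.monom (1::'a) i) i = Polynomial.coeff (Polynomial.monom 1 j) i" by simp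
  then show "i = j" by (auto split: if_splits)
qed

lemma cw_expand: "degree f < k \<Longrightarrow> cw f = (\<Sum>j<k. vscale (Polynomial.coeff f j) (bb j))"
proof
  fix i assume df: "degree f < k"
  show "cw f i = (\<Sum>j<k. vscale (Polynomial.coeff f j) (bb j)) i"
  proof (cases "i < n")
    case True
    have "cw f i = v i * (\<Sum>j<k. Polynomial.coeff f j * a i ^ j)" using True poly_lt_sum[OF df] by (simp add: cw_def)
    also have "\<dots> = (\<Sum>j<k. vscale (Polynomial.coeff f j) (bb j) i)"
      using True by (simp add: sum_distrib_left vscale_def bb_def cw_def poly_monom algebra_simps)
    finally show ?thesis by (simp add: sum_fun_apply)
  next
    case False
    then show ?thesis by (simp add: sum_fun_apply cw_def vscale_def bb_def)
  qed
qed

lemma dim_CC: "V.dim CC = k"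
proof (rule V.dim_unique[of "bb ` {..<k}"])
  show "bb ` {..<k} \<subseteq> CC" by (auto simp: CC_def bb_def degree_monom_eq)
  show "CC \<subseteq> V.span (bb ` {..<k})"
  proof
    fix x assume "x \<in> CC"
    then obtain f where f: "x = cw f" "degree f < k" by (auto simp: CC_def)
    show "x \<in> V.span (bb ` {..<k})"
      unfolding f(1) cw_expand[OF f(2)]
      by (intro V.span_sum V.span_scale V.span_base) auto
  qed
  show "V.independent (bb ` {..<k})"
  proof (rule V.independent_if_scalars_zero)
    fix c x assume sum0: "(\<Sum>x\<in>bb ` {..<k}. vscale (c x) x) = 0" and x: "x \<in> bb ` {..<k}"
    define P where "P = (\<Sum>j<k. Polynomial.monom (c (bb j)) j)"
    have "cw P = (\<Sum>j<k. vscale (c (bb j)) (bb j))"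
      unfolding P_def cw_sum bb_def by (intro sum.cong refl) (metis cw_smult smult_monom mult.right_neutral)
    also have "\<dots> = (\<Sum>x\<in>bb ` {..<k}. vscale (c x) x)"
      by (simp add: sum.reindex[OF bb_inj])
    finally have "cw P = cw 0" using sum0 cw_0 by simp
    moreover have "degree P < n" unfolding P_def using kn
      by (intro le_less_trans[OF degree_sum_le]) (auto intro: order.trans[OF degree_monom_le])
    ultimately have "P = 0" using kn by (intro cw_eq_imp) auto
    moreover obtain j where j: "j < k" "x = bb j" using x by auto
    ultimately have "Polynomial.coeff P j = 0" by simp
    moreover have "Polynomial.coeff P j = c (bb j)" using j(1) by (simp add: P_def coeff_sum)
    ultimately show "c x = 0" using j by simp
  qed simp
  show "card (bb ` {..<k}) = k" using bb_inj by (simp add: card_image)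
qed

lemma code_dim_CC: "code_dim CC = k"
  using dim_CC by (simp add: code_dim_def)

lemma hd_cw: "hamming_dist n (cw f) (cw g) = card {i. i < n \<and> poly (f - g) (a i) \<noteq> 0}"
  unfolding hamming_dist_def
  by (rule arg_cong[where f=card]) (auto simp: cw_def vnz)

lemma wt_lower:
  assumes "f \<noteq> g" "degree f < k" "degree g < k"
  shows "n - k + 1 \<le> card {i. i < n \<and> poly (f - g) (a i) \<noteq> 0}"
proof -
  let ?h = "f - g"
  have h0: "?h \<noteq> 0" using assms by simp
  have dh: "degree ?h < k" using assms degree_diff_le_max[of f g] by simp
  let ?Z = "{i. i < n \<and> poly ?h (a i) = 0}"
  have "card ?Z = card (a ` ?Z)" using inj by (intro card_image[symmetric]) (auto intro: inj_on_subset)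
  also have "\<dots> \<le> card {x. poly ?h x = 0}" by (intro card_mono poly_roots_finite[OF h0]) auto
  also have "\<dots> \<le> degree ?h" by (rule card_poly_roots_bound[OF h0])
  finally have cz: "card ?Z \<le> k - 1" using dh by simp
  let ?W = "{i. i < n \<and> poly ?h (a i) \<noteq> 0}"
  have u: "{..<n} = ?Z \<union> ?W" by auto
  have "card (?Z \<union> ?W) = card ?Z + card ?W" by (rule card_Un_disjoint) auto
  moreover have "n = card (?Z \<union> ?W)" using u by (metis card_lessThan)
  ultimately have "n = card ?Z + card ?W" by simp
  then show ?thesis using cz k1 kn by linarith
qed

lemma min_dist_CC: "min_dist n CC = n - k + 1"
proof -
  let ?S = "{hamming_dist n x y | x y. x \<in> CC \<and> y \<in> CC \<and> x \<noteq> y}"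
  have fin: "finite ?S"
  proof (rule finite_subset[of _ "{..n}"])
    show "?S \<subseteq> {..n}"
    proof
      fix d assume "d \<in> ?S"
      then obtain x y :: "nat \<Rightarrow> 'a" where "d = hamming_dist n x y" by blast
      moreover have "card {i. i < n \<and> x i \<noteq> y i} \<le> card {..<n}" by (intro card_mono) auto
      ultimately show "d \<in> {..n}" by (simp add: hamming_dist_def)
    qed
  qed simp
  have lb: "n - k + 1 \<le> d" if "d \<in> ?S" for d
  proof -
    obtain x y where xy: "d = hamming_dist n x y" "x \<in> CC" "y \<in> CC" "x \<noteq> y" using \<open>d \<in> ?S\<close> by auto
    then obtain f g where "x = cw f" "y = cw g" "degree f < k" "degree g < k" by (auto simp: CC_def)
    with xy show ?thesis using wt_lower[of f g] hd_cw by auto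
  qed
  define f0 where "f0 = (\<Prod>j<k-1. [:- a j, 1:])"
  have df0: "degree f0 = k - 1" unfolding f0_def by (subst degree_prod_eq_sum_degree) auto
  have f0nz: "f0 \<noteq> 0" unfolding f0_def by (auto simp: prod_zero_iff)
  have zeros: "{i. i < n \<and> poly (f0 - 0) (a i) \<noteq> 0} = {i. i < n \<and> \<not> i < k - 1}"
  proof -
    have "poly f0 (a i) = 0 \<longleftrightarrow> i < k - 1" if "i < n" for i
    proof -
      have "poly f0 (a i) = 0 \<longleftrightarrow> (\<exists>j<k-1. a i = a j)" unfolding f0_def poly_prod by auto
      also have "\<dots> \<longleftrightarrow> i < k - 1"
      proof
        assume "\<exists>j<k-1. a i = a j"
        then obtain j where j: "j < k - 1" "a i = a j" by auto
        then have "j < n" using kn by simp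
        then have "i = j" using inj_onD[OF inj j(2)] that by simp
        then show "i < k - 1" using j by simp
      qed auto
      finally show ?thesis .
    qed
    then show ?thesis by auto
  qed
  have "card {i. i < n \<and> \<not> i < k - 1} = n - (k - 1)"
  proof -
    have "{i. i < n \<and> \<not> i < k - 1} = {k-1..<n}" by auto
    then show ?thesis by simp
  qed
  then have hd0: "hamming_dist n (cw f0) (cw 0) = n - k + 1" using hd_cw zeros k1 kn by simp
  have "cw f0 \<noteq> cw 0"
  proof
    assume "cw f0 = cw 0"
    then have "f0 = 0" using df0 kn by (intro cw_eq_imp) auto
    then show False using f0nz by simp
  qed
  moreover have "cw f0 \<in> CC" "cw 0 \<in> CC" using df0 k1 by (auto simp: CC_def)
  ultimately have "n - k + 1 \<in> ?S" using hd0 by force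
  then show ?thesis unfolding min_dist_def using fin lb by (intro Min_eqI) auto
qed

theorem MDS_self_dual_CC: "MDS_self_dual n CC"
  unfolding MDS_self_dual_def is_MDS_def self_dual_def
  using linear_CC min_dist_CC code_dim_CC CC_sub_dual dual_sub_CC by auto

end

lemma GRS_set:
  fixes S :: "'a::field set" and lam :: 'a
  assumes fin: "finite S" and cS: "card S = 2 * k" and k1: "1 \<le> k" and lam: "lam \<noteq> 0"
    and sq: "\<And>s. s \<in> S \<Longrightarrow> \<exists>w. w \<noteq> 0 \<and> w ^ 2 = lam * (\<Prod>b\<in>S-{s}. s - b)"
  shows "\<exists>C :: (nat \<Rightarrow> 'a) set. MDS_self_dual (2 * k) C"
proof -
  define n where "n = 2 * k"
  obtain a where a: "bij_betw a {0..<n} S" using ex_bij_betw_nat_finite[OF fin] cS n_def by auto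
  have inj: "inj_on a {..<n}" using a by (auto simp: bij_betw_def atLeast0LessThan)
  have aS: "a ` {..<n} = S" using a by (auto simp: bij_betw_def atLeast0LessThan)
  have UP: "Uf a n i = (\<Prod>b\<in>S-{a i}. a i - b)" if i: "i < n" for i
  proof -
    have "S - {a i} = a ` ({..<n} - {i})" using aS inj i by (auto simp: inj_on_def)
    moreover have "inj_on a ({..<n} - {i})" using inj by (rule inj_on_subset) auto
    ultimately show ?thesis unfolding Uf_def by (simp add: prod.reindex)
  qed
  have "\<exists>vv. vv \<noteq> 0 \<and> vv ^ 2 * Uf a n i = lam" if i: "i < n" for i
  proof -
    have aiS: "a i \<in> S" using aS i by auto
    obtain w where w: "w \<noteq> 0" "w ^ 2 = lam * Uf a n i" using sq[OF aiS] UP[OF i] by auto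
    have U0: "Uf a n i \<noteq> 0" using Uf_nz[OF inj i] .
    show ?thesis
    proof (intro exI conjI)
      show "lam / w \<noteq> 0" using w lam by simp
      show "(lam / w) ^ 2 * Uf a n i = lam"
        using w U0 lam by (simp add: power_divide field_simps power2_eq_square)
    qed
  qed
  then obtain v where v: "\<And>i. i < n \<Longrightarrow> v i \<noteq> 0 \<and> v i ^ 2 * Uf a n i = lam" by metis
  interpret G: grs n k a v lam
    by unfold_locales (use n_def k1 inj v lam in auto)
  show ?thesis using G.MDS_self_dual_CC n_def by auto
qed


definition fring :: "('a::field) ring" where
  "fring = \<lparr>carrier = UNIV, monoid.mult = (*), one = 1, zero = 0, add = (+)\<rparr>"

lemma fring_field: "field (fring :: ('a::field) ring)"
proof -
  have ag: "abelian_group (fring :: 'a ring)"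
  proof (rule abelian_groupI)
    fix y :: 'a
    show "\<exists>x\<in>carrier fring. x \<oplus>\<^bsub>fring\<^esub> y = \<zero>\<^bsub>fring\<^esub>"
      by (rule bexI[of _ "- y"]) (simp_all add: fring_def)
  qed (simp_all add: fring_def ac_simps)
  have cm: "comm_monoid (fring :: 'a ring)"
    by (rule comm_monoidI) (simp_all add: fring_def ac_simps)
  have cr: "cring (fring :: 'a ring)"
    by (rule cringI[OF ag cm]) (simp add: fring_def distrib_right)
  show ?thesis
  proof (rule cring.cring_fieldI2[OF cr])
    show "\<zero>\<^bsub>fring\<^esub> \<noteq> \<one>\<^bsub>(fring :: 'a ring)\<^esub>" by (simp add: fring_def)
    fix x :: 'a assume "x \<in> carrier fring" "x \<noteq> \<zero>\<^bsub>fring\<^esub>"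
    then have "x \<noteq> 0" by (simp add: fring_def)
    then show "\<exists>b\<in>carrier fring. x \<otimes>\<^bsub>fring\<^esub> b = \<one>\<^bsub>fring\<^esub>"
      by (intro bexI[of _ "inverse x"]) (simp_all add: fring_def)
  qed
qed

lemma fring_pow: "x [^]\<^bsub>(fring::('a::field) ring)\<^esub> (n::nat) = x ^ n"
  by (induction n) (auto simp: fring_def)

lemma exists_gen:
  "\<exists>w::'a::{finite,field}. \<forall>x. x \<noteq> 0 \<longrightarrow> (\<exists>i::nat. x = w ^ i)"
proof -
  have fin: "finite (carrier (fring::'a ring))" by (simp add: fring_def)
  have "\<exists>a\<in>carrier (mult_of (fring::'a ring)). carrier (mult_of (fring::'a ring)) = {a[^]\<^bsub>fring\<^esub>i | i::nat . i \<in> UNIV}"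
    by (rule field.finite_field_mult_group_has_gen[OF fring_field fin])
  then obtain a where a: "carrier (mult_of (fring::'a ring)) = {a[^]\<^bsub>fring\<^esub>i | i::nat . i \<in> UNIV}"
    by (rule bexE)
  show ?thesis
  proof (rule exI[of _ a], intro allI impI)
    fix x :: 'a assume "x \<noteq> 0"
    then have "x \<in> carrier (mult_of (fring::'a ring))" by (simp add: fring_def del: carrier_mult_of) (simp add: carrier_mult_of)
    then have "x \<in> {a[^]\<^bsub>fring\<^esub>i | i::nat . i \<in> UNIV}" by (simp only: a)
    then obtain i::nat where "x = a[^]\<^bsub>fring\<^esub>i" by (auto simp del: carrier_mult_of)
    then show "\<exists>i. x = a ^ i" by (auto simp: nat_pow_mult_of fring_pow)
  qed
qed



lemma DER:
  fixes S :: "'a::field set"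
  assumes "finite S" "a \<in> S"
  shows "poly (pderiv (\<Prod>b\<in>S. [:- b, 1:])) a = (\<Prod>b\<in>S-{a}. a - b)"
proof -
  have "poly (pderiv (\<Prod>b\<in>S. [:- b, 1:])) a = (\<Sum>c\<in>S. \<Prod>b\<in>S-{c}. a - b)"
    by (simp add: pderiv_prod poly_sum poly_prod pderiv_pCons)
  also have "\<dots> = (\<Prod>b\<in>S-{a}. a - b) + (\<Sum>c\<in>S-{a}. \<Prod>b\<in>S-{c}. a - b)"
    using assms by (simp add: sum.remove)
  also have "(\<Sum>c\<in>S-{a}. \<Prod>b\<in>S-{c}. a - b) = 0"
    by (rule sum.neutral) (use assms in \<open>auto intro!: prod_zero\<close>)
  finally show ?thesis by simp
qed

lemma P_decomp:
  fixes T :: "'k \<Rightarrow> 'a::field set"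
  assumes K: "finite K" and fT: "\<And>k. k \<in> K \<Longrightarrow> finite (T k)"
    and dis: "\<And>k k'. k \<in> K \<Longrightarrow> k' \<in> K \<Longrightarrow> k \<noteq> k' \<Longrightarrow> T k \<inter> T k' = {}"
    and k0: "k0 \<in> K" and a: "a \<in> T k0"
  shows "(\<Prod>b\<in>(\<Union>k\<in>K. T k) - {a}. a - b) = (\<Prod>b\<in>T k0 - {a}. a - b) * (\<Prod>k\<in>K-{k0}. \<Prod>b\<in>T k. a - b)"
proof -
  have eq: "(\<Union>k\<in>K. T k) - {a} = (T k0 - {a}) \<union> (\<Union>k\<in>K-{k0}. T k)"
    using dis k0 a by blast
  have d1: "(T k0 - {a}) \<inter> (\<Union>k\<in>K-{k0}. T k) = {}" using dis k0 by blast
  have "(\<Prod>b\<in>(\<Union>k\<in>K. T k) - {a}. a - b) = (\<Prod>b\<in>T k0 - {a}. a - b) * (\<Prod>b\<in>(\<Union>k\<in>K-{k0}. T k). a - b)"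
    unfolding eq by (rule prod.union_disjoint) (use K fT k0 d1 in auto)
  also have "(\<Prod>b\<in>(\<Union>k\<in>K-{k0}. T k). a - b) = (\<Prod>k\<in>K-{k0}. \<Prod>b\<in>T k. a - b)"
    by (rule prod.UNION_disjoint) (use K fT dis in auto)
  finally show ?thesis .
qed

locale ffq =
  fixes p m r :: nat and w :: "'a::{finite,field}"
  assumes p: "prime p" "odd p" and m1: "m \<ge> 1" and r: "r = p ^ m"
    and card: "CARD('a) = r ^ 2"
    and gen: "\<And>x. x \<noteq> 0 \<Longrightarrow> \<exists>i. x = w ^ i"
begin

definition N :: nat where "N = r ^ 2 - 1"
definition ch :: "'a \<Rightarrow> 'a" where "ch x = x ^ (N div 2)"

lemma r3: "r \<ge> 3"
proof -
  have "p \<ge> 3" using p prime_ge_2_nat[of p] by (cases "p = 2") auto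
  moreover have "p \<le> p ^ m" using m1 prime_gt_0_nat[OF p(1)] by (simp add: self_le_power)
  ultimately show ?thesis using r by simp
qed

lemma r_odd: "odd r" using p r by simp

lemma N_eq: "N = (r - 1) * (r + 1)"
  using r3 by (simp add: N_def power2_eq_square algebra_simps)

lemma N_half: "N div 2 = (r - 1) * ((r + 1) div 2)"
proof -
  obtain j where "r + 1 = 2 * j" using r_odd by (metis evenE odd_even_add odd_one)
  then show ?thesis by (simp add: N_eq)
qed

lemma N_pos: "N > 0" using r3 by (simp add: N_eq)

lemma CARD_N: "CARD('a) = N + 1" using card r3 by (simp add: N_def)

lemma pow_N: assumes "x \<noteq> 0" shows "x ^ N = (1::'a)"
proof -
  have fin: "finite (UNIV - {0::'a})" by simp
  have cN: "card (UNIV - {0::'a}) = N" using CARD_N by (simp add: card_Diff_singleton)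
  have "(\<Prod>y\<in>UNIV-{0}. x * y) = (\<Prod>y\<in>UNIV-{0::'a}. y)"
    by (rule prod.reindex_bij_witness[of _ "\<lambda>y. y / x" "\<lambda>y. x * y"]) (use assms in auto)
  moreover have "(\<Prod>y\<in>UNIV-{0}. x * y) = x ^ N * (\<Prod>y\<in>UNIV-{0::'a}. y)"
    by (simp add: prod.distrib cN)
  moreover have "(\<Prod>y\<in>UNIV-{0::'a}. y) \<noteq> 0" by simp
  ultimately show ?thesis by simp
qed

lemma card_ge: "CARD('a) \<ge> 9"
proof -
  have "3 * 3 \<le> r * r" using r3 by (intro mult_le_mono) auto
  then show ?thesis using card by (simp add: power2_eq_square)
qed

lemma w_nz: "w \<noteq> 0"
proof
  assume w0: "w = 0"
  have "\<not> UNIV \<subseteq> {0::'a, 1}"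
  proof
    assume "UNIV \<subseteq> {0::'a, 1}"
    then have "CARD('a) \<le> card {0::'a, 1}" by (intro card_mono) auto
    also have "\<dots> \<le> 2" by (simp add: card_insert_le_m1)
    finally show False using card_ge by simp
  qed
  then obtain x :: 'a where "x \<notin> {0, 1}" by auto
  then obtain i where "x = w ^ i" using gen by auto
  then show False using \<open>x \<notin> {0,1}\<close> w0 by (cases i) auto
qed

lemma wN: "w ^ N = 1" using pow_N[OF w_nz] .

lemma wNc: "w ^ (N * c) = 1" by (simp add: power_mult wN)

lemma w_mod: "w ^ i = w ^ (i mod N)"
proof -
  have "w ^ i = w ^ (N * (i div N) + i mod N)" by simp
  also have "\<dots> = w ^ (i mod N)" by (simp only: power_add wNc) simp
  finally show ?thesis .
qed

lemma w_inj: "inj_on (\<lambda>i. w ^ i) {..<N}"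
proof (rule eq_card_imp_inj_on)
  have "(\<lambda>i. w ^ i) ` {..<N} = UNIV - {0}"
  proof
    show "(\<lambda>i. w ^ i) ` {..<N} \<subseteq> UNIV - {0}" using w_nz by auto
    show "UNIV - {0} \<subseteq> (\<lambda>i. w ^ i) ` {..<N}"
    proof
      fix x assume "x \<in> UNIV - {0::'a}"
      then obtain i where "x = w ^ i" using gen by auto
      then have "x = w ^ (i mod N)" using w_mod by simp
      then show "x \<in> (\<lambda>i. w ^ i) ` {..<N}" using N_pos by auto
    qed
  qed
  then show "card ((\<lambda>i. w ^ i) ` {..<N}) = card {..<N}"
    using CARD_N by (simp add: card_Diff_singleton)
qed simp

lemma w_eq_iff: "w ^ i = w ^ j \<longleftrightarrow> i mod N = j mod N"
proof
  assume "w ^ i = w ^ j"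
  then have "w ^ (i mod N) = w ^ (j mod N)" using w_mod by metis
  then show "i mod N = j mod N" using w_inj N_pos by (auto simp: inj_on_def)
next
  assume "i mod N = j mod N"
  then show "w ^ i = w ^ j" using w_mod by metis
qed

lemma w_one_iff: "w ^ i = 1 \<longleftrightarrow> N dvd i"
  using w_eq_iff[of i 0] by (metis mod_0 power_0 dvd_eq_mod_eq_0)

lemma ch_mult: "ch (x * y) = ch x * ch y"
  by (simp add: ch_def power_mult_distrib)

lemma ch_prod: "ch (\<Prod>i\<in>I. f i) = (\<Prod>i\<in>I. ch (f i))"
  by (simp add: ch_def prod_power_distrib)

lemma ch_pow: "ch (x ^ k) = ch x ^ k"
  by (simp add: ch_def flip: power_mult) (simp add: mult.commute)

lemma sq_crit: assumes "x \<noteq> 0" "ch x = 1" shows "\<exists>y. y \<noteq> 0 \<and> y ^ 2 = x"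
proof -
  obtain i where i: "x = w ^ i" using gen assms(1) by auto
  then have "w ^ (i * (N div 2)) = 1" using assms(2) by (simp add: ch_def power_mult)
  then have "N dvd i * (N div 2)" using w_one_iff by simp
  moreover have "even N" using r_odd N_eq by simp
  ultimately have "(N div 2) * 2 dvd (N div 2) * i" by (simp add: mult.commute)
  moreover have "N div 2 > 0" using N_pos \<open>even N\<close> by (auto elim!: evenE)
  ultimately have "2 dvd i" by (simp add: nat_mult_dvd_cancel_disj)
  then obtain j where "i = 2 * j" by auto
  then show ?thesis using i w_nz by (intro exI[of _ "w ^ j"]) (simp add: power_mult[symmetric] mult.commute)
qed

lemma CHAR_p: "CHAR('a) = p"
proof -
  have pos: "CHAR('a) > 0" by (rule finite_imp_CHAR_pos) simp
  have pr: "prime CHAR('a)" by (rule prime_CHAR_semidom[OF pos])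
  have "CHAR('a) dvd CARD('a)" by (rule CHAR_dvd_CARD)
  then have "CHAR('a) dvd p ^ (m * 2)" using card r by (simp add: power_mult)
  then have "CHAR('a) dvd p" using pr prime_dvd_power by blast
  then show ?thesis using pr p(1) by (simp add: primes_dvd_imp_eq)
qed

lemma frob_add: "(x + y :: 'a) ^ r = x ^ r + y ^ r"
  by (rule freshmans_dream') (auto simp: CHAR_p p r)

lemma frob_diff: "(x - y :: 'a) ^ r = x ^ r - y ^ r"
proof -
  have "x ^ r = ((x - y) + y) ^ r" by simp
  also have "\<dots> = (x - y) ^ r + y ^ r" by (rule frob_add)
  finally show ?thesis by (simp add: algebra_simps)
qed

lemma of_nat_frob: "(of_nat n :: 'a) ^ r = of_nat n"
proof (induction n)
  case 0 then show ?case using r3 by simp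
next
  case (Suc n)
  have "(of_nat (Suc n)::'a) ^ r = (of_nat n + 1) ^ r" by (simp add: add.commute)
  also have "\<dots> = of_nat n ^ r + 1" by (simp add: frob_add)
  also have "\<dots> = of_nat (Suc n)" using Suc by simp
  finally show ?case .
qed

lemma of_nat_nz: "\<not> p dvd n \<Longrightarrow> (of_nat n :: 'a) \<noteq> 0"
  by (simp add: of_nat_eq_0_iff_char_dvd CHAR_p)

lemma Fr_ch: assumes "x \<noteq> 0" "x ^ r = x" shows "ch x = 1"
proof -
  have "x ^ (r - 1) * x = x ^ r" using r3 by (simp flip: power_Suc2)
  then have "x ^ (r - 1) = 1" using assms by simp
  then show ?thesis by (simp add: ch_def N_half power_mult)
qed

lemma mu_ch:
  assumes y: "y ^ (r + 1) = 1" and z: "z ^ (r + 1) = 1" and yz: "y \<noteq> z"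
  shows "ch (y - z) * (y * z) ^ ((r + 1) div 2) = (-1) ^ ((r + 1) div 2)"
proof -
  have yr: "y ^ r * y = 1" using y by (simp flip: power_Suc2)
  have zr: "z ^ r * z = 1" using z by (simp flip: power_Suc2)
  have "(y - z) ^ r * (y * z) = (y ^ r * y) * z - (z ^ r * z) * y"
    by (simp add: frob_diff algebra_simps)
  also have "\<dots> = - (y - z)" using yr zr by simp
  finally have e: "(y - z) ^ r * (y * z) = - (y - z)" .
  have "(y - z) ^ r = (y - z) ^ (r - 1) * (y - z)" using r3 by (simp flip: power_Suc2)
  with e have "((y - z) ^ (r - 1) * (y * z) + 1) * (y - z) = 0" by (simp add: algebra_simps)
  then have "(y - z) ^ (r - 1) * (y * z) + 1 = 0" using yz by simp
  then have e2: "(y - z) ^ (r - 1) * (y * z) = -1" by (simp add: eq_neg_iff_add_eq_0)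
  have "ch (y - z) * (y * z) ^ ((r + 1) div 2) = ((y - z) ^ (r - 1) * (y * z)) ^ ((r + 1) div 2)"
    by (simp add: ch_def N_half power_mult power_mult_distrib)
  also have "\<dots> = (-1) ^ ((r + 1) div 2)" using e2 by simp
  finally show ?thesis .
qed

lemma ch_w_even: "ch (w ^ (2 * i)) = 1"
proof -
  have "even N" using r_odd N_eq by simp
  have "ch (w ^ (2 * i)) = w ^ (2 * i * (N div 2))" by (simp add: ch_def power_mult)
  also have "2 * i * (N div 2) = N * i" using \<open>even N\<close> by (auto elim!: evenE)
  finally show ?thesis using wNc by simp
qed

lemma N8: "8 dvd N"
proof -
  obtain j where j: "r = 2 * j + 1" using r_odd oddE by blast
  have "N = (r - 1) * (r + 1)" by (rule N_eq)
  also have "\<dots> = 4 * (j * (j + 1))" using j by (simp add: algebra_simps)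
  finally have e: "N = 4 * (j * (j + 1))" .
  have "even (j * (j + 1))" by simp
  then have "\<exists>t. j * (j + 1) = 2 * t" unfolding dvd_def by simp
  then obtain t where "j * (j + 1) = 2 * t" by blast
  then have "N = 8 * t" using e by simp
  then show ?thesis by simp
qed

lemma ch_m1: "ch (-1) = 1"
proof -
  have "even (N div 2)" using N8 by (auto elim!: dvdE)
  then show ?thesis by (simp add: ch_def)
qed

lemma ch_pm: assumes "x \<noteq> 0" shows "ch x = 1 \<or> ch x = -1"
proof -
  have "ch x ^ 2 = 1"
  proof -
    have "even N" using N8 by (auto elim!: dvdE)
    then have "ch x ^ 2 = x ^ N" by (simp add: ch_def flip: power_mult)
    then show ?thesis using pow_N[OF assms] by simp
  qed
  then show ?thesis by (simp add: power2_eq_1_iff)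
qed

lemma ch_inv: assumes "x \<noteq> 0" shows "ch (inverse x) = ch x"
proof -
  have "ch (inverse x) * ch x = ch (inverse x * x)" by (simp add: ch_mult)
  also have "\<dots> = 1" using assms by (simp add: ch_def)
  finally have h: "ch (inverse x) * ch x = 1" .
  from ch_pm[OF assms] show ?thesis
  proof
    assume "ch x = 1" then show ?thesis using h by simp
  next
    assume c: "ch x = -1"
    then have "- ch (inverse x) = 1" using h by simp
    then show ?thesis using c by (metis minus_equation_iff)
  qed
qed

definition cos :: "nat \<Rightarrow> nat \<Rightarrow> nat \<Rightarrow> 'a set" where
  "cos e f j = (\<lambda>h. w ^ (j + e * h)) ` {..<f}"

lemma cos_inj: assumes "e * f = N" shows "inj_on (\<lambda>h. w ^ (j + e * h)) {..<f}"
proof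
  fix h h' assume hh: "h \<in> {..<f}" "h' \<in> {..<f}" "w ^ (j + e * h) = w ^ (j + e * h')"
  then have "[j + e * h = j + e * h'] (mod N)" by (simp add: w_eq_iff cong_def)
  then have "[e * h = e * h'] (mod N)" by (simp add: cong_add_lcancel_nat)
  then have "e * (h mod f) = e * (h' mod f)" using assms by (simp add: cong_def mult_mod_right)
  moreover have "e > 0" using assms N_pos by (cases e) auto
  ultimately show "h = h'" using hh by simp
qed

lemma cos_card: "e * f = N \<Longrightarrow> card (cos e f j) = f"
  using cos_inj by (simp add: cos_def card_image)

lemma cos_fin: "finite (cos e f j)" by (simp add: cos_def)

lemma cos_nz: "0 \<notin> cos e f j" using w_nz by (auto simp: cos_def)

lemma cos_poly:
  assumes ef: "e * f = N"
  shows "(\<Prod>b\<in>cos e f j. [:- b, 1:]) = Polynomial.monom 1 f - [:w ^ (j * f):]"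
proof (rule ccontr)
  let ?Q = "\<Prod>b\<in>cos e f j. [:- b, 1:]"
  let ?T = "Polynomial.monom 1 f - [:w ^ (j * f):] :: 'a poly"
  assume ne: "?Q \<noteq> ?T"
  have f0: "f > 0" using ef N_pos by (cases f) auto
  have dQ: "degree ?Q = f"
    by (subst degree_prod_eq_sum_degree) (auto simp: cos_card[OF ef] cos_fin)
  have cQ: "Polynomial.coeff ?Q f = 1"
    using lead_coeff_prod[of "\<lambda>b. [:- b, 1:]" "cos e f j"] dQ by simp
  have dT: "degree ?T \<le> f"
    by (rule order.trans[OF degree_diff_le_max]) (auto simp: degree_monom_le)
  have cT: "Polynomial.coeff ?T f = 1" using f0 by (simp add: coeff_pCons split: nat.split)
  let ?D = "?Q - ?T"
  have D0: "?D \<noteq> 0" using ne by simp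
  have "degree ?D \<le> f" using dQ dT by (intro order.trans[OF degree_diff_le_max]) auto
  moreover have "Polynomial.coeff ?D f = 0" using cQ cT by simp
  ultimately have dD: "degree ?D < f" using D0 by (metis le_neq_implies_less leading_coeff_0_iff)
  have "cos e f j \<subseteq> {x. poly ?D x = 0}"
  proof
    fix b assume b: "b \<in> cos e f j"
    then obtain h where h: "b = w ^ (j + e * h)" by (auto simp: cos_def)
    have "poly ?Q b = 0" using b cos_fin by (auto simp: poly_prod intro!: prod_zero)
    moreover have "b ^ f = w ^ (j * f)"
    proof -
      have ex: "(j + e * h) * f = j * f + (e * f) * h" by (simp add: algebra_simps)
      have "b ^ f = w ^ ((j + e * h) * f)" using h by (simp add: power_mult)
      also have "\<dots> = w ^ (j * f) * w ^ (N * h)" by (simp only: ex ef power_add)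
      also have "\<dots> = w ^ (j * f)" by (simp add: wNc)
      finally show ?thesis .
    qed
    ultimately show "b \<in> {x. poly ?D x = 0}" by (simp add: poly_monom)
  qed
  then have "card (cos e f j) \<le> card {x. poly ?D x = 0}" by (intro card_mono poly_roots_finite[OF D0])
  also have "\<dots> \<le> degree ?D" by (rule card_poly_roots_bound[OF D0])
  finally show False using dD cos_card[OF ef] by simp
qed

lemma cos_prod:
  assumes "e * f = N"
  shows "(\<Prod>b\<in>cos e f j. x - b) = x ^ f - w ^ (j * f)"
proof -
  have "(\<Prod>b\<in>cos e f j. x - b) = poly (\<Prod>b\<in>cos e f j. [:- b, 1:]) x" by (simp add: poly_prod)
  also have "\<dots> = x ^ f - w ^ (j * f)" by (simp add: cos_poly[OF assms] poly_monom)
  finally show ?thesis .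
qed

lemma cos_P:
  assumes "e * f = N" "a \<in> cos e f j"
  shows "(\<Prod>b\<in>cos e f j - {a}. a - b) = of_nat f * a ^ (f - 1)"
proof -
  have "(\<Prod>b\<in>cos e f j - {a}. a - b) = poly (pderiv (\<Prod>b\<in>cos e f j. [:- b, 1:])) a"
    by (rule DER[symmetric]) (use assms cos_fin in auto)
  also have "\<dots> = of_nat f * a ^ (f - 1)"
    by (simp add: cos_poly[OF assms(1)] pderiv_diff pderiv_monom poly_monom pderiv_pCons)
  finally show ?thesis .
qed

abbreviation PP :: "'a set \<Rightarrow> 'a \<Rightarrow> 'a" where
  "PP S s \<equiv> (\<Prod>b\<in>S-{s}. s - b)"

lemma PP_nz: "finite S \<Longrightarrow> PP S s \<noteq> 0"
  by (simp add: prod_zero_iff)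

lemma code_even:
  assumes fin: "finite S" and cS: "card S = n" and ev: "even n" and n2: "n \<ge> 2" and lam: "lam \<noteq> 0"
    and chS: "\<And>s. s \<in> S \<Longrightarrow> ch (lam * PP S s) = 1"
  shows "\<exists>C :: (nat \<Rightarrow> 'a) set. MDS_self_dual n C"
proof -
  obtain k where k: "n = 2 * k" using ev by auto
  have "\<exists>C :: (nat \<Rightarrow> 'a) set. MDS_self_dual (2 * k) C"
  proof (rule GRS_set[OF fin _ _ lam])
    show "card S = 2 * k" using cS k by simp
    show "1 \<le> k" using n2 k by simp
    fix s assume "s \<in> S"
    then show "\<exists>w. w \<noteq> 0 \<and> w ^ 2 = lam * PP S s"
      using sq_crit[of "lam * PP S s"] chS PP_nz[OF fin] lam by auto
  qed
  then show ?thesis using k by simp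
qed

lemma add0:
  assumes fin: "finite A" and A0: "0 \<notin> A" and cha: "\<And>a. a \<in> A \<Longrightarrow> ch a = 1"
    and chP: "\<And>a. a \<in> A \<Longrightarrow> ch (PP A a) = 1"
  shows "\<And>b. b \<in> insert 0 A \<Longrightarrow> ch (PP (insert 0 A) b) = 1"
proof -
  fix b assume b: "b \<in> insert 0 A"
  show "ch (PP (insert 0 A) b) = 1"
  proof (cases "b = 0")
    case True
    have "PP (insert 0 A) b = (\<Prod>x\<in>A. 0 - x)" using True A0 by (simp add: insert_Diff_if)
    also have "ch \<dots> = (\<Prod>x\<in>A. ch (-1) * ch x)" by (simp add: ch_prod flip: ch_mult)
    also have "\<dots> = 1" using cha ch_m1 by simp
    finally show ?thesis .
  next
    case False
    then have bA: "b \<in> A" using b by simp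
    have "insert 0 A - {b} = insert 0 (A - {b})" using False by auto
    then have "PP (insert 0 A) b = (b - 0) * PP A b" using fin A0 by simp
    then show ?thesis using cha[OF bA] chP[OF bA] by (simp add: ch_mult)
  qed
qed

lemma ch_nz: "ch x = 1 \<Longrightarrow> x \<noteq> 0"
  using N8 N_pos by (auto simp: ch_def zero_power elim!: dvdE)

lemma ch_sq1: assumes "x \<noteq> 0" shows "ch x * ch x = 1"
proof -
  from ch_pm[OF assms] show ?thesis by auto
qed

lemma mobius:
  assumes fin: "finite B" and odd: "odd (card B)" and c: "c \<notin> B"
    and chP: "\<And>b. b \<in> B \<Longrightarrow> ch (PP B b) = 1"
  shows "\<exists>T lam. finite T \<and> card T = card B + 1 \<and> lam \<noteq> 0 \<and> (\<forall>t\<in>T. ch (lam * PP T t) = 1)"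
proof -
  define phi where "phi b = inverse (b - c)" for b
  define K where "K = (\<Prod>b\<in>B. b - c)"
  define T where "T = insert 0 (phi ` B)"
  have K0: "K \<noteq> 0" using c fin by (auto simp: K_def prod_zero_iff)
  have phi0: "phi b \<noteq> 0" if "b \<in> B" for b using that c by (auto simp: phi_def)
  have phi_inj: "inj_on phi B" by (auto simp: inj_on_def phi_def)
  have z: "0 \<notin> phi ` B" using phi0 by auto
  have cT: "card T = card B + 1" using z phi_inj fin by (simp add: T_def card_image)
  have chK: "ch K = (\<Prod>b\<in>B. ch (b - c))" by (simp add: K_def ch_prod)
  have key: "ch (PP T t) = ch K" if t: "t \<in> T" for t
  proof (cases "t = 0")
    case True
    have "PP T t = (\<Prod>x\<in>phi ` B. 0 - x)" using True z by (simp add: T_def)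
    also have "\<dots> = (\<Prod>b\<in>B. - phi b)" using phi_inj by (simp add: prod.reindex)
    finally have "ch (PP T t) = (\<Prod>b\<in>B. ch (-1) * ch (phi b))" by (simp add: ch_prod flip: ch_mult)
    also have "\<dots> = (\<Prod>b\<in>B. ch (b - c))"
    proof (intro prod.cong refl)
      fix b assume "b \<in> B"
      then have "b - c \<noteq> 0" using c by auto
      then show "ch (-1) * ch (phi b) = ch (b - c)" by (simp add: ch_m1 phi_def ch_inv)
    qed
    finally show ?thesis using chK by simp
  next
    case False
    then obtain b where b: "b \<in> B" "t = phi b" using t by (auto simp: T_def)
    have bc: "b - c \<noteq> 0" using b c by auto
    have "T - {t} = insert 0 (phi ` (B - {b}))" using b phi_inj False
      by (auto simp: T_def inj_on_def)
    moreover have "0 \<notin> phi ` (B - {b})" using z by auto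
    ultimately have "PP T t = (t - 0) * (\<Prod>x\<in>phi ` (B - {b}). t - x)" using fin by simp
    also have "(\<Prod>x\<in>phi ` (B - {b}). t - x) = (\<Prod>b'\<in>B - {b}. phi b - phi b')"
      using b inj_on_subset[OF phi_inj] by (subst prod.reindex) auto
    finally have e: "ch (PP T t) = ch (phi b) * (\<Prod>b'\<in>B - {b}. ch (phi b - phi b'))"
      using b by (simp add: ch_mult ch_prod)
    have f: "ch (phi b - phi b') = ch (b - b') * ch (b - c) * ch (b' - c)" if b': "b' \<in> B - {b}" for b'
    proof -
      have b'c: "b' - c \<noteq> 0" using b' c by auto
      have "phi b - phi b' = (-1) * (b - b') * inverse (b - c) * inverse (b' - c)"
        using bc b'c by (simp add: phi_def field_simps)
      then have "ch (phi b - phi b') = ch (-1) * ch (b - b') * ch (inverse (b - c)) * ch (inverse (b' - c))"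
        by (simp only: ch_mult)
      then have "ch (phi b - phi b') = ch (-1) * ch (b - b') * ch (b - c) * ch (b' - c)"
        by (simp only: ch_inv[OF bc] ch_inv[OF b'c])
      then show ?thesis by (simp add: ch_m1)
    qed
    have "(\<Prod>b'\<in>B - {b}. ch (phi b - phi b')) = (\<Prod>b'\<in>B - {b}. ch (b - b') * ch (b - c) * ch (b' - c))"
      using f by (rule prod.cong[OF refl])
    also have "\<dots> = ch (PP B b) * ch (b - c) ^ (card B - 1) * (\<Prod>b'\<in>B - {b}. ch (b' - c))"
      using fin b by (simp add: prod.distrib ch_prod card_Diff_singleton)
    also have "ch (b - c) ^ (card B - 1) = 1"
    proof -
      have "even (card B - 1)" using odd by simp
      then have "\<exists>j. card B - 1 = 2 * j" unfolding dvd_def by simp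
      then obtain j where "card B - 1 = 2 * j" by blast
      then show ?thesis using ch_sq1[OF bc] by (simp add: power_mult power2_eq_square)
    qed
    finally have "(\<Prod>b'\<in>B - {b}. ch (phi b - phi b')) = (\<Prod>b'\<in>B - {b}. ch (b' - c))"
      using chP[OF b(1)] by simp
    then have "ch (PP T t) = ch (b - c) * (\<Prod>b'\<in>B - {b}. ch (b' - c))"
      using e by (simp add: phi_def ch_inv[OF bc])
    also have "\<dots> = ch K" using chK fin b by (simp add: prod.remove)
    finally show ?thesis .
  qed
  show ?thesis
  proof (intro exI conjI ballI)
    show "finite T" using fin by (simp add: T_def)
    show "card T = card B + 1" by (rule cT)
    show "K \<noteq> 0" by (rule K0)
    fix t assume "t \<in> T"
    then show "ch (K * PP T t) = 1" using key ch_sq1[OF K0] by (simp add: ch_mult)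
  qed
qed

end


lemma arith_params:
  fixes r e1 f1 e2 f2 l :: nat
  assumes rodd: "odd r" and r3: "r \<ge> 3"
    and e1f1: "e1 * f1 = (r - 1) * (r + 1)" and e2f2: "e2 * f2 = (r - 1) * (r + 1)"
    and e1p: "e1 > 0" and e2p: "e2 > 0"
    and l2: "l \<ge> 2" and cg: "[e1 = 2 ^ l] (mod 2 ^ (l + 1))" and d2: "2 ^ l dvd e2"
    and h1: "2 * e2 dvd e1 * (r - 1)" and h2: "e1 dvd e2 * (r + 1)"
  shows "\<exists>g2 D1 D2 R1 R2. e1 = 2 * g2 * D1 \<and> e2 = 2 * g2 * D2 \<and> gcd e1 e2 = 2 * g2
          \<and> even g2 \<and> g2 > 0 \<and> odd D1 \<and> r + 1 = 2 * D1 * R1 \<and> r - 1 = 2 * D2 * R2"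
proof -
  define g where "g = gcd e1 e2"
  define D1 where "D1 = e1 div g"
  define D2 where "D2 = e2 div g"
  have gp: "g > 0" using e1p by (simp add: g_def)
  have e1g: "e1 = g * D1" by (simp add: D1_def g_def)
  have e2g: "e2 = g * D2" by (simp add: D2_def g_def)
  have cop: "coprime D1 D2" unfolding D1_def D2_def g_def using e1p by (intro div_gcd_coprime) auto
  have "e1 mod 2 ^ (l + 1) = 2 ^ l mod 2 ^ (l + 1)" using cg by (simp add: cong_def)
  then have m: "e1 mod 2 ^ (l + 1) = 2 ^ l" by simp
  have d1: "2 ^ l dvd e1"
  proof -
    have "e1 = e1 div 2 ^ (l + 1) * 2 ^ (l + 1) + e1 mod 2 ^ (l + 1)" by (rule div_mult_mod_eq[symmetric])
    also have "\<dots> = 2 ^ l * (2 * (e1 div 2 ^ (l + 1)) + 1)" using m by (simp add: algebra_simps)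
    finally show ?thesis by (rule dvdI)
  qed
  have lg: "2 ^ l dvd g" using d1 d2 by (simp add: g_def)
  have "4 dvd (2::nat) ^ l"
  proof -
    have "l = 2 + (l - 2)" using l2 by simp
    then have "(2::nat) ^ l = 2 ^ 2 * 2 ^ (l - 2)" by (metis power_add)
    then show ?thesis by simp
  qed
  then have g4: "4 dvd g" using lg dvd_trans by blast
  then obtain g2 where g2: "g = 2 * g2" "even g2" by (auto elim!: dvdE)
  have D1odd: "odd D1"
  proof
    assume "even D1"
    then have "2 ^ l * 2 dvd g * D1" using lg by (intro mult_dvd_mono) auto
    then have "2 ^ (l + 1) dvd e1" using e1g by (simp add: mult.commute)
    then have "e1 mod 2 ^ (l + 1) = 0" by simp
    then show False using m by simp
  qed
  have "g * D1 dvd g * (D2 * (r + 1))" using h2 e1g e2g by (simp only: mult.assoc)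
  then have "D1 dvd D2 * (r + 1)" using gp by (simp only: nat_mult_dvd_cancel_disj) simp
  then have "D1 dvd r + 1" using cop by (metis coprime_dvd_mult_right_iff)
  moreover have "2 dvd r + 1" using rodd by simp
  moreover have "coprime 2 D1" using D1odd by simp
  ultimately have "2 * D1 dvd r + 1" by (simp add: divides_mult)
  then obtain R1 where R1: "r + 1 = 2 * D1 * R1" by (auto elim!: dvdE)
  have "g * (2 * D2) dvd g * (D1 * (r - 1))" using h1 e1g e2g by (simp only: mult.assoc mult.left_commute)
  then have "2 * D2 dvd D1 * (r - 1)" using gp by (simp only: nat_mult_dvd_cancel_disj) simp
  moreover have "coprime (2 * D2) D1" using cop D1odd by (simp add: coprime_commute)
  ultimately have "2 * D2 dvd r - 1" by (metis coprime_dvd_mult_right_iff)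
  then obtain R2 where R2: "r - 1 = 2 * D2 * R2" by (auto elim!: dvdE)
  have "g2 > 0" using gp g2 by simp
  show ?thesis
    by (rule exI[of _ g2], rule exI[of _ D1], rule exI[of _ D2], rule exI[of _ R1], rule exI[of _ R2])
       (use e1g e2g g2 D1odd R1 R2 \<open>g2 > 0\<close> g_def in \<open>simp add: mult.assoc\<close>)
qed


context ffq
begin

lemma w_half: "w ^ (N div 2) = -1"
proof -
  have ev: "even N" using N8 by (auto elim!: dvdE)
  have "(w ^ (N div 2)) ^ 2 = 1" using ev wN by (simp flip: power_mult)
  then have "w ^ (N div 2) = 1 \<or> w ^ (N div 2) = -1" by (simp add: power2_eq_1_iff)
  moreover have "w ^ (N div 2) \<noteq> 1"
  proof
    assume "w ^ (N div 2) = 1"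
    then have "N dvd N div 2" using w_one_iff by simp
    moreover have "0 < N div 2" "N div 2 < N" using N_pos ev by (auto elim!: evenE)
    ultimately show False by (auto dest: dvd_imp_le)
  qed
  ultimately show ?thesis by simp
qed

lemma ch_of_nat: assumes "f dvd N" shows "ch (of_nat f) = 1"
proof (rule Fr_ch)
  show "(of_nat f :: 'a) ^ r = of_nat f" by (rule of_nat_frob)
  show "(of_nat f :: 'a) \<noteq> 0"
  proof (rule of_nat_nz)
    show "\<not> p dvd f"
    proof
      assume "p dvd f"
      then have "p dvd N" using assms by (rule dvd_trans)
      moreover have "p dvd r ^ 2" using r m1 by (simp add: power_mult[symmetric])
      moreover have "r ^ 2 = N + 1" using r3 by (simp add: N_def)
      ultimately have "p dvd 1" by (metis dvd_add_right_iff)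
      then show False using p(1) by simp
    qed
  qed
qed

lemma Fr_diff_ch: assumes "y ^ r = y" "z ^ r = z" "y \<noteq> z" shows "ch (y - z) = 1"
  using assms by (intro Fr_ch) (simp_all add: frob_diff)

lemma cos_mod:
  assumes "b \<in> cos e f j" "b \<in> cos e' f' j'" "d dvd e" "d dvd e'" "d dvd N"
  shows "j mod d = j' mod d"
proof -
  obtain h where b1: "b = w ^ (j + e * h)" using assms(1) by (auto simp: cos_def)
  obtain h' where b2: "b = w ^ (j' + e' * h')" using assms(2) by (auto simp: cos_def)
  from b1 b2 have "w ^ (j + e * h) = w ^ (j' + e' * h')" by simp
  then have "(j + e * h) mod N = (j' + e' * h') mod N" using w_eq_iff by simp
  then have "(j + e * h) mod N mod d = (j' + e' * h') mod N mod d" by simp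
  then have "(j + e * h) mod d = (j' + e' * h') mod d" using assms(5) by (simp add: mod_mod_cancel)
  moreover obtain q where "e = d * q" using assms(3) by auto
  moreover obtain q' where "e' = d * q'" using assms(4) by auto
  ultimately show ?thesis by (simp add: mult.assoc)
qed

end

locale nt = ffq p m r w for p m r :: nat and w :: "'a::{finite,field}" +
  fixes g2 D1 D2 R1 R2 f1 f2 s t :: nat
  assumes rp1: "r + 1 = 2 * D1 * R1" and rm1: "r - 1 = 2 * D2 * R2"
    and g2e: "even g2" and g2p: "g2 > 0" and D1o: "odd D1"
    and f1d: "g2 * f1 = 2 * D2 * R1 * R2" and f2d: "g2 * f2 = 2 * D1 * R1 * R2"
    and s1: "1 \<le> s" and sD: "s \<le> D1" and t1: "1 \<le> t" and tD: "t \<le> D2"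
    and sev: "even ((s - 1) * R1)"
begin

definition "g = 2 * g2"
definition "e1 = g * D1"
definition "e2 = g * D2"

lemma NN: "N = 4 * D1 * D2 * R1 * R2"
proof -
  have "N = (r - 1) * (r + 1)" by (rule N_eq)
  also have "\<dots> = (2 * D2 * R2) * (2 * D1 * R1)" by (simp only: rp1 rm1)
  finally show ?thesis by (simp add: algebra_simps)
qed

lemma e1f1: "e1 * f1 = N"
proof -
  have "e1 * f1 = 2 * D1 * (g2 * f1)" by (simp add: e1_def g_def algebra_simps)
  then show ?thesis by (simp add: f1d NN)
qed

lemma e2f2: "e2 * f2 = N"
proof -
  have "e2 * f2 = 2 * D2 * (g2 * f2)" by (simp add: e2_def g_def algebra_simps)
  then show ?thesis by (simp add: f2d NN)
qed

lemma Rh: "(r + 1) div 2 = D1 * R1" using rp1 by simp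

definition "u = w ^ (2 * D2 * R1 * R2)"
definition "v = w ^ (2 * D1 * R1 * R2)"

lemma u_r1: "(u ^ i) ^ (r + 1) = 1"
proof -
  have "(u ^ i) ^ (r + 1) = (u ^ i) ^ (2 * D1 * R1)" by (simp only: rp1)
  also have "\<dots> = w ^ (2 * D2 * R1 * R2 * i * (2 * D1 * R1))" by (simp only: u_def power_mult)
  also have "2 * D2 * R1 * R2 * i * (2 * D1 * R1) = N * (R1 * i)" by (simp add: NN algebra_simps)
  finally show ?thesis by (simp add: wNc)
qed

lemma u_half: "u ^ (D1 * R1) = (-1) ^ R1"
proof -
  have "u ^ (D1 * R1) = w ^ (2 * D2 * R1 * R2 * (D1 * R1))" by (simp only: u_def power_mult)
  also have "2 * D2 * R1 * R2 * (D1 * R1) = (N div 2) * R1" by (simp add: NN algebra_simps)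
  finally show ?thesis by (simp add: w_half power_mult)
qed

lemma v_r: "(v ^ i) ^ r = v ^ i"
proof -
  have "r = 1 + (r - 1)" using r3 by simp
  then have "(v ^ i) ^ r = v ^ i * (v ^ i) ^ (r - 1)" by (metis power_add power_one_right)
  also have "(v ^ i) ^ (r - 1) = (v ^ i) ^ (2 * D2 * R2)" by (simp only: rm1)
  also have "\<dots> = w ^ (2 * D1 * R1 * R2 * i * (2 * D2 * R2))" by (simp only: v_def power_mult)
  also have "2 * D1 * R1 * R2 * i * (2 * D2 * R2) = N * (R2 * i)" by (simp add: NN algebra_simps)
  finally show ?thesis by (simp add: wNc)
qed

lemma wpow_eq: "x = N * c + y \<Longrightarrow> w ^ x = w ^ y"
  by (simp add: power_add wNc)

lemma g_pos: "g > 0" using g2p by (simp add: g_def)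
lemma g2_lt: "g2 < g" using g2p by (simp add: g_def)
lemma e1_dvd_N: "e1 dvd N" using dvd_triv_left[of e1 f1] e1f1 by simp
lemma e2_dvd_N: "e2 dvd N" using dvd_triv_left[of e2 f2] e2f2 by simp
lemma g_dvd_N: "g dvd N" using e1_dvd_N dvd_trans[of g e1 N] by (simp add: e1_def)
lemma D1p: "D1 > 0" using sD s1 by simp
lemma D2p: "D2 > 0" using tD t1 by simp

definition TT :: "nat \<Rightarrow> 'a set" where
  "TT k = (if k < s then cos e1 f1 (g * k) else cos e2 f2 (g2 + g * (k - s)))"

definition AA :: "'a set" where "AA = (\<Union>k\<in>{..<s+t}. TT k)"

lemma TT_fin: "finite (TT k)" by (simp add: TT_def cos_fin)

lemma TT_card: "card (TT k) = (if k < s then f1 else f2)"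
  by (simp add: TT_def cos_card e1f1 e2f2)

lemma lt1: "k < s \<Longrightarrow> g * k < e1"
proof -
  assume "k < s"
  then have "k < D1" using sD by simp
  then show "g * k < e1" using g_pos by (simp add: e1_def)
qed

lemma lt2: "k < t \<Longrightarrow> g2 + g * k < e2"
proof -
  assume "k < t"
  then have "k + 1 \<le> D2" using tD by simp
  from mult_le_mono2[OF this, of g] have "g * k + g \<le> g * D2" by (simp only: distrib_left mult_1_right)
  then show "g2 + g * k < e2" using g2_lt unfolding e2_def by linarith
qed

lemma TT_dis:
  assumes k: "k < s + t" and k': "k' < s + t" and ne: "k \<noteq> k'"
  shows "TT k \<inter> TT k' = {}"
proof (rule ccontr)
  assume "TT k \<inter> TT k' \<noteq> {}"
  then obtain b where b: "b \<in> TT k" "b \<in> TT k'" by auto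
  have ge1: "g dvd e1" "g dvd e2" by (simp_all add: e1_def e2_def)
  have e1N: "e1 dvd N" "e2 dvd N" by (rule e1_dvd_N, rule e2_dvd_N)
  consider "k < s" "k' < s" | "k < s" "\<not> k' < s" | "\<not> k < s" "k' < s" | "\<not> k < s" "\<not> k' < s" by blast
  then show False
  proof cases
    case 1
    then have "(g * k) mod e1 = (g * k') mod e1" using b e1N
      by (intro cos_mod[of b e1 f1 _ e1 f1]) (auto simp: TT_def)
    then have "g * k = g * k'" using lt1 1 by simp
    then show False using ne g_pos by simp
  next
    case 2
    then have "(g * k) mod g = (g2 + g * (k' - s)) mod g" using b ge1 g_dvd_N
      by (intro cos_mod[of b e1 f1 _ e2 f2]) (auto simp: TT_def)
    then show False using g2_lt g2p by simp
  next
    case 3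
    then have "(g2 + g * (k - s)) mod g = (g * k') mod g" using b ge1 g_dvd_N
      by (intro cos_mod[of b e2 f2 _ e1 f1]) (auto simp: TT_def)
    then show False using g2_lt g2p by simp
  next
    case 4
    then have "(g2 + g * (k - s)) mod e2 = (g2 + g * (k' - s)) mod e2" using b e1N
      by (intro cos_mod[of b e2 f2 _ e2 f2]) (auto simp: TT_def)
    moreover have "k - s < t" "k' - s < t" using 4 k k' by auto
    ultimately have "g * (k - s) = g * (k' - s)" using lt2 by simp
    then have "k - s = k' - s" using g_pos by simp
    then show False using ne 4 by simp
  qed
qed

lemma AA_fin: "finite AA" by (simp add: AA_def TT_fin)

lemma AA_card: "card AA = s * f1 + t * f2"
proof -
  have "card AA = (\<Sum>k<s+t. card (TT k))"
    unfolding AA_def by (rule card_UN_disjoint) (auto simp: TT_fin TT_dis)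
  also have "\<dots> = (\<Sum>k<s+t. if k < s then f1 else f2)" by (simp add: TT_card)
  also have "\<dots> = (\<Sum>k<s. f1) + (\<Sum>k\<in>{s..<s+t}. f2)"
  proof -
    have "{..<s+t} = {..<s} \<union> {s..<s+t}" by auto
    then have "(\<Sum>k<s+t. if k < s then f1 else f2) = (\<Sum>k<s. if k < s then f1 else f2) + (\<Sum>k\<in>{s..<s+t}. if k < s then f1 else f2)"
      by (simp add: sum.union_disjoint ivl_disj_int)
    then show ?thesis by simp
  qed
  also have "\<dots> = s * f1 + t * f2" by simp
  finally show ?thesis .
qed

lemma AA_0: "0 \<notin> AA" using cos_nz by (auto simp: AA_def TT_def split: if_splits)

lemma ch_cos_even: "even e \<Longrightarrow> even j \<Longrightarrow> a \<in> cos e f j \<Longrightarrow> ch a = 1"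
proof -
  assume "even e" "even j" "a \<in> cos e f j"
  then obtain h where ah: "a = w ^ (j + e * h)" by (auto simp: cos_def)
  have "even (j + e * h)" using \<open>even e\<close> \<open>even j\<close> by simp
  then have "\<exists>x. j + e * h = 2 * x" unfolding dvd_def by simp
  then obtain x where "j + e * h = 2 * x" by blast
  then have "a = w ^ (2 * x)" using ah by simp
  then show "ch a = 1" by (simp add: ch_w_even)
qed

lemma AA_ch: "a \<in> AA \<Longrightarrow> ch a = 1"
proof -
  assume "a \<in> AA"
  then obtain k where "k < s + t" "a \<in> TT k" by (auto simp: AA_def)
  moreover have "even g" "even e1" "even e2" "even g2" using g2e by (simp_all add: g_def e1_def e2_def)
  ultimately show "ch a = 1"
  proof (cases "k < s")
    case True
    then have "a \<in> cos e1 f1 (g * k)" using \<open>a \<in> TT k\<close> by (simp add: TT_def)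
    then show ?thesis using \<open>even g\<close> \<open>even e1\<close> by (intro ch_cos_even[of e1 "g * k" a f1]) simp_all
  next
    case False
    then have "a \<in> cos e2 f2 (g2 + g * (k - s))" using \<open>a \<in> TT k\<close> by (simp add: TT_def)
    then show ?thesis using \<open>even g\<close> \<open>even e2\<close> \<open>even g2\<close> by (intro ch_cos_even[of e2 "g2 + g * (k - s)" a f2]) simp_all
  qed
qed

lemma u_pow: "u ^ i = w ^ (2 * D2 * R1 * R2 * i)" by (simp add: u_def power_mult)
lemma v_pow: "v ^ i = w ^ (2 * D1 * R1 * R2 * i)" by (simp add: v_def power_mult)

lemma type1:
  assumes "a \<in> cos e1 f1 (g * k0)"
  obtains h where "a ^ f1 = u ^ (2 * k0)" "a ^ f2 = v ^ (2 * k0 + 2 * D1 * h)"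
proof -
  obtain h where a: "a = w ^ (g * k0 + e1 * h)" using assms by (auto simp: cos_def)
  have x1: "(g * k0 + e1 * h) * f1 = N * h + 2 * D2 * R1 * R2 * (2 * k0)"
  proof -
    have "(g * k0 + e1 * h) * f1 = 2 * k0 * (g2 * f1) + (e1 * f1) * h" by (simp add: g_def algebra_simps)
    also have "\<dots> = 2 * k0 * (2 * D2 * R1 * R2) + N * h" by (simp only: f1d e1f1)
    finally show ?thesis by (simp add: algebra_simps)
  qed
  have x2: "(g * k0 + e1 * h) * f2 = 2 * D1 * R1 * R2 * (2 * k0 + 2 * D1 * h)"
  proof -
    have "(g * k0 + e1 * h) * f2 = (2 * k0 + 2 * D1 * h) * (g2 * f2)" by (simp add: g_def e1_def algebra_simps)
    also have "\<dots> = (2 * k0 + 2 * D1 * h) * (2 * D1 * R1 * R2)" by (simp only: f2d)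
    finally show ?thesis by (simp add: algebra_simps)
  qed
  have "a ^ f1 = u ^ (2 * k0)" unfolding a u_pow power_mult[symmetric] x1 by (rule wpow_eq[of _ h]) simp
  moreover have "a ^ f2 = v ^ (2 * k0 + 2 * D1 * h)" unfolding a v_pow power_mult[symmetric] x2 ..
  ultimately show ?thesis by (rule that)
qed

lemma type2:
  assumes "a \<in> cos e2 f2 (g2 + g * k0)"
  obtains h where "a ^ f1 = u ^ (1 + 2 * k0 + 2 * D2 * h)" "a ^ f2 = v ^ (1 + 2 * k0)"
proof -
  obtain h where a: "a = w ^ (g2 + g * k0 + e2 * h)" using assms by (auto simp: cos_def)
  have x1: "(g2 + g * k0 + e2 * h) * f1 = 2 * D2 * R1 * R2 * (1 + 2 * k0 + 2 * D2 * h)"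
  proof -
    have "(g2 + g * k0 + e2 * h) * f1 = (1 + 2 * k0 + 2 * D2 * h) * (g2 * f1)" by (simp add: g_def e2_def algebra_simps)
    also have "\<dots> = (1 + 2 * k0 + 2 * D2 * h) * (2 * D2 * R1 * R2)" by (simp only: f1d)
    finally show ?thesis by (simp add: algebra_simps)
  qed
  have x2: "(g2 + g * k0 + e2 * h) * f2 = N * h + 2 * D1 * R1 * R2 * (1 + 2 * k0)"
  proof -
    have "(g2 + g * k0 + e2 * h) * f2 = (1 + 2 * k0) * (g2 * f2) + (e2 * f2) * h" by (simp add: g_def algebra_simps)
    also have "\<dots> = (1 + 2 * k0) * (2 * D1 * R1 * R2) + N * h" by (simp only: f2d e2f2)
    finally show ?thesis by (simp add: algebra_simps)
  qed
  have "a ^ f1 = u ^ (1 + 2 * k0 + 2 * D2 * h)" unfolding a u_pow power_mult[symmetric] x1 ..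
  moreover have "a ^ f2 = v ^ (1 + 2 * k0)" unfolding a v_pow power_mult[symmetric] x2 by (rule wpow_eq[of _ h]) simp
  ultimately show ?thesis by (rule that)
qed

lemma const1: "w ^ (g * k * f1) = u ^ (2 * k)"
proof -
  have ex: "g * k * f1 = 2 * D2 * R1 * R2 * (2 * k)"
  proof -
    have "g * k * f1 = 2 * k * (g2 * f1)" by (simp add: g_def algebra_simps)
    also have "\<dots> = 2 * k * (2 * D2 * R1 * R2)" by (simp only: f1d)
    finally show ?thesis by (simp add: algebra_simps)
  qed
  show ?thesis by (simp only: u_pow ex)
qed

lemma const2: "w ^ ((g2 + g * k) * f2) = v ^ (1 + 2 * k)"
proof -
  have ex: "(g2 + g * k) * f2 = 2 * D1 * R1 * R2 * (1 + 2 * k)"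
  proof -
    have "(g2 + g * k) * f2 = (1 + 2 * k) * (g2 * f2)" by (simp add: g_def algebra_simps)
    also have "\<dots> = (1 + 2 * k) * (2 * D1 * R1 * R2)" by (simp only: f2d)
    finally show ?thesis by (simp add: algebra_simps)
  qed
  show ?thesis by (simp only: v_pow ex)
qed

lemma ch_uu:
  assumes "u ^ i \<noteq> u ^ j"
  shows "ch (u ^ i - u ^ j) * (-1) ^ (R1 * (i + j)) = (-1) ^ (D1 * R1)"
proof -
  have m: "ch (u ^ i - u ^ j) * (u ^ i * u ^ j) ^ ((r + 1) div 2) = (-1) ^ ((r + 1) div 2)"
    by (rule mu_ch) (use u_r1 assms in auto)
  have B: "(u ^ i * u ^ j) ^ ((r + 1) div 2) = (-1) ^ (R1 * (i + j))"
  proof -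
    have "(u ^ i * u ^ j) ^ ((r + 1) div 2) = (u ^ (i + j)) ^ (D1 * R1)" by (simp only: Rh power_add)
    also have "\<dots> = u ^ ((D1 * R1) * (i + j))" by (simp only: mult.commute[of D1] power_mult[symmetric]) (simp add: algebra_simps)
    also have "\<dots> = (u ^ (D1 * R1)) ^ (i + j)" by (simp only: power_mult)
    finally have "(u ^ i * u ^ j) ^ ((r + 1) div 2) = (u ^ (D1 * R1)) ^ (i + j)" .
    also have "\<dots> = (-1) ^ (R1 * (i + j))" unfolding u_half by (simp only: power_mult)
    finally show ?thesis .
  qed
  from m show ?thesis unfolding Rh B[unfolded Rh] .
qed

lemma ch_vv: "v ^ i \<noteq> v ^ j \<Longrightarrow> ch (v ^ i - v ^ j) = 1"
  by (rule Fr_diff_ch) (simp_all add: v_r)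

lemma pm1: "(-1::'a) ^ (D1 * R1) = (-1) ^ R1"
proof -
  show ?thesis using D1o by (simp add: minus_one_power_iff)
qed

lemma sgn_val:
  assumes k0: "k0 < s + t" and a: "a \<in> TT k0" and k: "k < s + t" and ne: "k \<noteq> k0"
  shows "ch (\<Prod>b\<in>TT k. a - b) = (if k0 < s \<and> k < s then (-1) ^ (D1 * R1) else 1)"
proof -
  have "a \<notin> TT k" using TT_dis[OF k k0 ne] a by auto
  then have nz: "(\<Prod>b\<in>TT k. a - b) \<noteq> 0" using TT_fin by (auto simp: prod_zero_iff)
  consider "k0 < s" "k < s" | "k0 < s" "\<not> k < s" | "\<not> k0 < s" "k < s" | "\<not> k0 < s" "\<not> k < s" by blast
  then show ?thesis
  proof cases
    case 1
    then have a1: "a \<in> cos e1 f1 (g * k0)" using a by (simp add: TT_def)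
    obtain h where h: "a ^ f1 = u ^ (2 * k0)" by (rule type1[OF a1])
    have P: "(\<Prod>b\<in>TT k. a - b) = u ^ (2 * k0) - u ^ (2 * k)"
      using 1 by (simp add: TT_def cos_prod e1f1 h const1)
    have e: "ch (\<Prod>b\<in>TT k. a - b) * (-1) ^ (R1 * (2 * k0 + 2 * k)) = (-1) ^ (D1 * R1)"
      unfolding P by (rule ch_uu) (use nz P in simp)
    moreover have "(-1::'a) ^ (R1 * (2 * k0 + 2 * k)) = 1" by (simp add: minus_one_power_iff)
    ultimately show ?thesis using 1 by simp
  next
    case 2
    then have a1: "a \<in> cos e1 f1 (g * k0)" using a by (simp add: TT_def)
    obtain h where h: "a ^ f2 = v ^ (2 * k0 + 2 * D1 * h)" by (rule type1[OF a1])
    have P: "(\<Prod>b\<in>TT k. a - b) = v ^ (2 * k0 + 2 * D1 * h) - v ^ (1 + 2 * (k - s))"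
      using 2 by (simp add: TT_def cos_prod e2f2 h const2)
    have "ch (\<Prod>b\<in>TT k. a - b) = 1" unfolding P by (rule ch_vv) (use nz P in simp)
    then show ?thesis using 2 by simp
  next
    case 3
    then have a1: "a \<in> cos e2 f2 (g2 + g * (k0 - s))" using a by (simp add: TT_def)
    obtain h where h: "a ^ f1 = u ^ (1 + 2 * (k0 - s) + 2 * D2 * h)" by (rule type2[OF a1])
    define i where "i = 1 + 2 * (k0 - s) + 2 * D2 * h"
    have P: "(\<Prod>b\<in>TT k. a - b) = u ^ i - u ^ (2 * k)"
      using 3 by (simp add: TT_def cos_prod e1f1 h const1 i_def)
    have "ch (\<Prod>b\<in>TT k. a - b) * (-1) ^ (R1 * (i + 2 * k)) = (-1) ^ (D1 * R1)"
      unfolding P by (rule ch_uu) (use nz P in simp)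
    moreover have "(-1::'a) ^ (R1 * (i + 2 * k)) = (-1) ^ R1"
    proof -
      have "R1 * (i + 2 * k) = R1 + 2 * (R1 * ((k0 - s) + D2 * h + k))" by (simp add: i_def algebra_simps)
      then show ?thesis by (simp add: power_add power_mult)
    qed
    moreover have "(-1::'a) ^ R1 \<noteq> 0" by simp
    ultimately show ?thesis using 3 pm1 by simp
  next
    case 4
    then have a1: "a \<in> cos e2 f2 (g2 + g * (k0 - s))" using a by (simp add: TT_def)
    obtain h where h: "a ^ f2 = v ^ (1 + 2 * (k0 - s))" by (rule type2[OF a1])
    have P: "(\<Prod>b\<in>TT k. a - b) = v ^ (1 + 2 * (k0 - s)) - v ^ (1 + 2 * (k - s))"
      using 4 by (simp add: TT_def cos_prod e2f2 h const2)
    have "ch (\<Prod>b\<in>TT k. a - b) = 1" unfolding P by (rule ch_vv) (use nz P in simp)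
    then show ?thesis using 4 by simp
  qed
qed

lemma AA_P: assumes aA: "a \<in> AA" shows "ch (PP AA a) = 1"
proof -
  obtain k0 where k0: "k0 < s + t" "a \<in> TT k0" using aA by (auto simp: AA_def)
  let ?K = "{..<s+t}"
  have dec: "PP AA a = PP (TT k0) a * (\<Prod>k\<in>?K-{k0}. \<Prod>b\<in>TT k. a - b)"
    unfolding AA_def by (rule P_decomp) (use k0 TT_fin TT_dis in auto)
  have own: "ch (PP (TT k0) a) = 1"
  proof (cases "k0 < s")
    case True
    then have "PP (TT k0) a = of_nat f1 * a ^ (f1 - 1)" using k0 cos_P[OF e1f1] by (simp add: TT_def)
    moreover have "f1 dvd N" using dvd_triv_right[of f1 e1] e1f1 by simp
    ultimately show ?thesis using AA_ch[OF aA] ch_of_nat[of f1] by (simp add: ch_mult ch_pow)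
  next
    case False
    then have "PP (TT k0) a = of_nat f2 * a ^ (f2 - 1)" using k0 cos_P[OF e2f2] by (simp add: TT_def)
    moreover have "f2 dvd N" using dvd_triv_right[of f2 e2] e2f2 by simp
    ultimately show ?thesis using AA_ch[OF aA] ch_of_nat[of f2] by (simp add: ch_mult ch_pow)
  qed
  have "ch (\<Prod>k\<in>?K-{k0}. \<Prod>b\<in>TT k. a - b) = (\<Prod>k\<in>?K-{k0}. ch (\<Prod>b\<in>TT k. a - b))"
    by (rule ch_prod)
  also have "\<dots> = (\<Prod>k\<in>?K-{k0}. if k0 < s \<and> k < s then (-1) ^ (D1 * R1) else 1)"
    by (rule prod.cong[OF refl]) (use sgn_val[OF k0(1) k0(2)] in auto)
  also have "\<dots> = 1"
  proof (cases "k0 < s")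
    case False then show ?thesis by simp
  next
    case True
    have U: "?K - {k0} = ({..<s} - {k0}) \<union> {s..<s+t}" using True by auto
    have "(\<Prod>k\<in>?K-{k0}. if k0 < s \<and> k < s then (-1::'a) ^ (D1 * R1) else 1)
      = (\<Prod>k\<in>{..<s} - {k0}. if k0 < s \<and> k < s then (-1) ^ (D1 * R1) else 1) * (\<Prod>k\<in>{s..<s+t}. if k0 < s \<and> k < s then (-1) ^ (D1 * R1) else 1)"
      unfolding U by (rule prod.union_disjoint) auto
    also have "(\<Prod>k\<in>{..<s} - {k0}. if k0 < s \<and> k < s then (-1::'a) ^ (D1 * R1) else 1) = (\<Prod>k\<in>{..<s} - {k0}. (-1) ^ (D1 * R1))"
      by (rule prod.cong) (use True in auto)
    also have "(\<Prod>k\<in>{s..<s+t}. if k0 < s \<and> k < s then (-1::'a) ^ (D1 * R1) else 1) = 1"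
      by (rule prod.neutral) auto
    also have "(\<Prod>k\<in>{..<s} - {k0}. (-1::'a) ^ (D1 * R1)) = ((-1) ^ (D1 * R1)) ^ (s - 1)"
      using True by (simp add: card_Diff_singleton)
    also have "\<dots> = 1"
    proof -
      have "((-1::'a) ^ (D1 * R1)) ^ (s - 1) = (-1) ^ (D1 * R1 * (s - 1))" by (simp only: power_mult)
      also have "\<dots> = 1"
      proof -
        have "\<exists>q. (s - 1) * R1 = 2 * q" using sev unfolding dvd_def by simp
        then obtain q where q: "(s - 1) * R1 = 2 * q" by blast
        have "D1 * R1 * (s - 1) = D1 * ((s - 1) * R1)" by (simp only: mult.commute mult.left_commute)
        also have "\<dots> = 2 * (D1 * q)" using q by simp
        finally have ex: "D1 * R1 * (s - 1) = 2 * (D1 * q)" .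
        show ?thesis unfolding ex by (simp only: power_mult) simp
      qed
      finally show ?thesis .
    qed
    finally show ?thesis by simp
  qed
  finally show ?thesis using dec own by (simp add: ch_mult)
qed

end

theorem theorem1:
  fixes r p m e1 f1 e2 f2 l s t :: nat
  assumes "prime p" and "odd p" and "m \<ge> 1" and "r = p ^ m"
    and "CARD('a) = r ^ 2"
    and "e1 > 0" "f1 > 0" "e2 > 0" "f2 > 0"
    and "r ^ 2 - 1 = e1 * f1" and "r ^ 2 - 1 = e2 * f2"
    and "l \<ge> 2" and "[e1 = 2 ^ l] (mod 2 ^ (l + 1))" and "2 ^ l dvd e2"
    and "2 * e2 dvd e1 * (r - 1)" and "e1 dvd e2 * (r + 1)"
    and "1 \<le> s" "s \<le> e1 div gcd e1 e2"
    and "1 \<le> t" "t \<le> e2 div gcd e1 e2"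
    and "4 dvd (s - 1) * (r + 1)"
  shows "(even (s * f1 + t * f2) \<longrightarrow>
            (\<exists>C :: (nat \<Rightarrow> 'a::{finite,field}) set. MDS_self_dual (s * f1 + t * f2) C))
       \<and> (odd (s * f1 + t * f2) \<longrightarrow>
            (\<exists>C :: (nat \<Rightarrow> 'a) set. MDS_self_dual (s * f1 + t * f2 + 1) C))
       \<and> (even (s * f1 + t * f2) \<longrightarrow>
            (\<exists>C :: (nat \<Rightarrow> 'a) set. MDS_self_dual (s * f1 + t * f2 + 2) C))"
proof -
  obtain w :: 'a where gen: "\<And>x. x \<noteq> 0 \<Longrightarrow> \<exists>i. x = w ^ i" using exists_gen by blast
  interpret F: ffq p m r w
    by unfold_locales (use assms gen in auto)
  have NN: "F.N = (r - 1) * (r + 1)" by (rule F.N_eq)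
  have e1f1: "e1 * f1 = (r - 1) * (r + 1)" using assms(10) NN by (simp add: F.N_def)
  have e2f2: "e2 * f2 = (r - 1) * (r + 1)" using assms(11) NN by (simp add: F.N_def)
  obtain g2 D1 D2 R1 R2 where P: "e1 = 2 * g2 * D1" "e2 = 2 * g2 * D2" "gcd e1 e2 = 2 * g2"
    "even g2" "g2 > 0" "odd D1" "r + 1 = 2 * D1 * R1" "r - 1 = 2 * D2 * R2"
    using arith_params[OF F.r_odd F.r3 e1f1 e2f2 assms(6) assms(8) assms(12) assms(13) assms(14) assms(15) assms(16)]
    by blast
  have D1p: "D1 > 0" using P(6) by (cases D1) auto
  have D2p: "D2 > 0" using P(2) assms(8) by (cases D2) auto
  have Nf: "(r - 1) * (r + 1) = 4 * D1 * D2 * R1 * R2" using P(7,8) by (simp add: algebra_simps)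
  have f1d: "g2 * f1 = 2 * D2 * R1 * R2"
  proof -
    have "(2 * D1) * (g2 * f1) = (2 * D1) * (2 * D2 * R1 * R2)"
      using e1f1 Nf P(1) by (simp add: algebra_simps)
    then show ?thesis using D1p by (simp add: algebra_simps)
  qed
  have f2d: "g2 * f2 = 2 * D1 * R1 * R2"
  proof -
    have "(2 * D2) * (g2 * f2) = (2 * D2) * (2 * D1 * R1 * R2)"
      using e2f2 Nf P(2) by (simp add: algebra_simps)
    then show ?thesis using D2p by (simp add: algebra_simps)
  qed
  have sD: "s \<le> D1" using assms(18) P(1,3,5) by simp
  have tD: "t \<le> D2" using assms(20) P(2,3,5) by simp
  have sev: "even ((s - 1) * R1)"
  proof -
    have "4 dvd (s - 1) * (2 * D1 * R1)" using assms(21) by (simp only: P(7))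
    moreover have "(s - 1) * (2 * D1 * R1) = 2 * ((s - 1) * D1 * R1)" by (simp add: algebra_simps)
    ultimately have "2 * 2 dvd 2 * ((s - 1) * D1 * R1)" by simp
    then have "2 dvd (s - 1) * D1 * R1" by (simp only: nat_mult_dvd_cancel_disj) simp
    then show ?thesis using P(6) by simp
  qed
  interpret T: nt p m r w g2 D1 D2 R1 R2 f1 f2 s t
    by unfold_locales (use P f1d f2d assms sD tD sev in auto)
  define n1 where "n1 = s * f1 + t * f2"
  have cA: "card T.AA = n1" by (simp add: T.AA_card n1_def)
  have f1p: "f1 \<ge> 1" "f2 \<ge> 1" using assms(7,9) by auto
  have n2: "n1 \<ge> 2"
  proof -
    have "1 * 1 \<le> s * f1" using f1p assms(17) by (intro mult_le_mono) auto
    moreover have "1 * 1 \<le> t * f2" using f1p assms(19) by (intro mult_le_mono) auto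
    ultimately show ?thesis unfolding n1_def by linarith
  qed
  have chA: "\<And>a. a \<in> T.AA \<Longrightarrow> F.ch (1 * F.PP T.AA a) = 1" using T.AA_P by simp
  have ch0: "\<And>b. b \<in> insert 0 T.AA \<Longrightarrow> F.ch (1 * F.PP (insert 0 T.AA) b) = 1"
    using F.add0[OF T.AA_fin T.AA_0 T.AA_ch T.AA_P] by simp
  have c0: "card (insert 0 T.AA) = n1 + 1" using T.AA_fin T.AA_0 cA by simp
  have part1: "even n1 \<longrightarrow> (\<exists>C :: (nat \<Rightarrow> 'a) set. MDS_self_dual n1 C)"
    using F.code_even[OF T.AA_fin cA _ n2 _ chA] by simp
  have part2: "odd n1 \<longrightarrow> (\<exists>C :: (nat \<Rightarrow> 'a) set. MDS_self_dual (n1 + 1) C)"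
    using F.code_even[OF _ c0 _ _ _ ch0] T.AA_fin n2 by simp
  have part3: "even n1 \<longrightarrow> (\<exists>C :: (nat \<Rightarrow> 'a) set. MDS_self_dual (n1 + 2) C)"
  proof
    assume ev: "even n1"
    have bound: "n1 + 1 < CARD('a)"
    proof -
      have g2: "g2 \<ge> 2" using P(4,5) by (auto elim!: evenE)
      have "4 * (s * f1) \<le> 4 * (D1 * f1)" using sD by simp
      also have "\<dots> \<le> 2 * g2 * D1 * f1" using g2 by simp
      also have "\<dots> = F.N" using e1f1 P(1) NN by simp
      finally have a1: "4 * (s * f1) \<le> F.N" .
      have "4 * (t * f2) \<le> 4 * (D2 * f2)" using tD by simp
      also have "\<dots> \<le> 2 * g2 * D2 * f2" using g2 by simp
      also have "\<dots> = F.N" using e2f2 P(2) NN by simp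
      finally have a2: "4 * (t * f2) \<le> F.N" .
      have "2 * n1 \<le> F.N" using a1 a2 by (simp add: n1_def)
      then show ?thesis using F.CARD_N F.N_pos by simp
    qed
    have "\<exists>c::'a. c \<notin> insert 0 T.AA"
    proof (rule ccontr)
      assume "\<not> (\<exists>c::'a. c \<notin> insert 0 T.AA)"
      then have "UNIV \<subseteq> insert 0 T.AA" by auto
      then have "CARD('a) \<le> card (insert 0 T.AA)" using T.AA_fin by (intro card_mono) auto
      then show False using bound c0 by simp
    qed
    then obtain c :: 'a where c: "c \<notin> insert 0 T.AA" by blast
    have "odd (card (insert 0 T.AA))" using c0 ev by simp
    then obtain TS lam where TS: "finite TS" "card TS = card (insert 0 T.AA) + 1" "lam \<noteq> 0"
      "\<forall>t\<in>TS. F.ch (lam * F.PP TS t) = 1"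
      using F.mobius[of "insert 0 T.AA" c] T.AA_fin c ch0 by auto
    have "card TS = n1 + 2" using TS(2) c0 by simp
    then show "\<exists>C :: (nat \<Rightarrow> 'a) set. MDS_self_dual (n1 + 2) C"
      using F.code_even[OF TS(1) _ _ _ TS(3)] TS(4) ev n2 by simp
  qed
  show ?thesis using part1 part2 part3 by (simp add: n1_def)
qed

end
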